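(* Let $F=\frac1N\sum_{n=1}^N F_n$ on $\mathbb{R}^{d_m\times d_n}$ satisfy the standing assumptions (A1)–(A4) below, and let $\{W^t\}$, $\{B^{t,j}_{k(n),n}\}$, $\{P^t_{k}\}$ be generated by the FedKRSO-SGD iteration described in the context with learning rate $0<\eta\le \frac{r}{16Ld_nJ}$. Then for every round $t\ge 0$, $$\mathbb{E}[F(W^{t+1})]\le \mathbb{E}[F(W^t)]+\frac{2Ld_nJ^2\eta^2}{r}\varsigma^2+\frac{\eta d_n^2L^2}{r^2}Q^t-\frac{3J\eta}{8}\mathbb{E}\big[\|\nabla F(W^t)\|_F^2\big]+\frac{LJ\eta^2d_n^2\sigma^2}{Nr^2},$$ where $Q^t:=\frac1N\sum_{n=1}^N\sum_{j=0}^{J-1}\mathbb{E}\big[\|B^{t,j}_{k(n),n}P^t_{k(n)}\|_F^2\big]$.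
   Context: Setting: $N$ clients; each client $n\in[N]$ has a differentiable local objective $F_n:\mathbb{R}^{d_m\times d_n}\to\mathbb{R}$ and the global objective is $F(W)=\frac1N\sum_{n=1}^N F_n(W)$. $\|\cdot\|_F$ is the Frobenius norm. Fix integers $r\ge1$ (rank), $K\ge1$ (number of seeds), $J\ge1$ (local steps), a learning rate $\eta>0$ and an initial matrix $W^0$. FedKRSO-SGD iteration (one interval per round, plain SGD, no momentum): at each round $t=0,1,2,\dots$, random matrices $P^t_1,\dots,P^t_K\in\mathbb{R}^{r\times d_n}$ are drawn, and each client $n$ independently draws an index $k(n)=k(n,t)$ uniformly from $\{1,\dots,K\}$. Client $n$ sets $B^{t,0}_{k(n),n}=0\in\mathbb{R}^{d_m\times r}$ and, for $j=0,\dots,J-1$, with local model $W^{t,j}_n:=W^t+B^{t,j}_{k(n),n}P^t_{k(n)}$, updates $$B^{t,j+1}_{k(n),n}=B^{t,j}_{k(n),n}-\eta\,\hat\nabla f_n(W^{t,j}_n)\,(P^t_{k(n)})^\top,$$ where $\hat\nabla f_n(W)$ is a stochastic gradient computed on a fresh sample. The next global model is $$W^{t+1}=W^t+\frac1N\sum_{n=1}^N B^{t,J}_{k(n),n}P^t_{k(n)}.$$ Standing assumptions: (A1) ($L$-smoothness) For all $n$ and all $W_1,W_2$: $\|\nabla F_n(W_1)-\nabla F_n(W_2)\|_F\le L\|W_1-W_2\|_F$. (A2) (Stochastic gradients) Conditionally on all past randomness and on the random matrices, $\mathbb{E}[\hat\nabla f_n(W)]=\nabla F_n(W)$ and $\mathbb{E}\|\hat\nabla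 f_n(W)-\nabla F_n(W)\|_F^2\le\sigma^2$ for all $W$; samples are independent across clients and steps. (A3) (Heterogeneity) There is $\varsigma\ge0$ with $\frac1N\sum_{n=1}^N\|\nabla F_n(W)\|_F^2\le\varsigma^2+\|\nabla F(W)\|_F^2$ for all $W$. (A4) (Random matrices) The matrices $\{P^t_k\}_{k\in[K],t}$ are mutually independent, independent of the data sampling and of the index draws, and each satisfies $P^t_k(P^t_k)^\top=\frac{d_n}{r}I_r$ almost surely and $\mathbb{E}[(P^t_k)^\top P^t_k]=I_{d_n}$. *)

theory Defs
  imports "HOL-Probability.Probability"
begin

definition avgF :: "nat \<Rightarrow> (nat \<Rightarrow> 'm \<Rightarrow> real) \<Rightarrow> 'm \<Rightarrow> real" where
  "avgF N Fn W = (\<Sum>n<N. Fn n W) / real N"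

definition avgGrad :: "nat \<Rightarrow> (nat \<Rightarrow> 'm \<Rightarrow> 'm::real_vector) \<Rightarrow> 'm \<Rightarrow> 'm" where
  "avgGrad N G W = (1 / real N) *\<^sub>R (\<Sum>n<N. G n W)"

text \<open>Local SGD steps of client n on the factor B (d_m x r), with fixed base model W,
  fixed random matrix P (r x d_n) and sample sequence xs (sample for step j is xs j).
  The stochastic gradient of client n at W with sample x is g n W x.\<close>
primrec localB ::
  "(nat \<Rightarrow> real^'dn^'dm \<Rightarrow> 'a \<Rightarrow> real^'dn^'dm) \<Rightarrow> real \<Rightarrow> nat \<Rightarrow> real^'dn^'dm
    \<Rightarrow> real^'dn^'r \<Rightarrow> (nat \<Rightarrow> 'a) \<Rightarrow> nat \<Rightarrow> real^'r^'dm" where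
  "localB g eta n W P xs 0 = 0"
| "localB g eta n W P xs (Suc j) =
     localB g eta n W P xs j
     - eta *\<^sub>R (g n (W + localB g eta n W P xs j ** P) (xs j) ** transpose P)"

text \<open>Global FedKRSO-SGD iterate for a fixed realisation: P t k is the k-th random matrix
  of round t, kk t n the index drawn by client n in round t, xi t n j the sample used by
  client n at local step j of round t.\<close>
primrec fedW ::
  "(nat \<Rightarrow> real^'dn^'dm \<Rightarrow> 'a \<Rightarrow> real^'dn^'dm) \<Rightarrow> real \<Rightarrow> nat \<Rightarrow> nat \<Rightarrow> real^'dn^'dm
    \<Rightarrow> (nat \<Rightarrow> nat \<Rightarrow> real^'dn^'r) \<Rightarrow> (nat \<Rightarrow> nat \<Rightarrow> nat) \<Rightarrow> (nat \<Rightarrow> nat \<Rightarrow> nat \<Rightarrow> 'a)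
    \<Rightarrow> nat \<Rightarrow> real^'dn^'dm" where
  "fedW g eta N J W0 P kk xi 0 = W0"
| "fedW g eta N J W0 P kk xi (Suc t) =
     fedW g eta N J W0 P kk xi t
     + (1 / real N) *\<^sub>R (\<Sum>n<N. localB g eta n (fedW g eta N J W0 P kk xi t)
                                   (P t (kk t n)) (xi t n) J ** P t (kk t n))"

definition Wrv where
  "Wrv g eta N J W0 P kk xi t w =
     fedW g eta N J W0 (\<lambda>t k. P t k w) (\<lambda>t n. kk t n w) (\<lambda>t n j. xi t n j w) t"

definition Brv where
  "Brv g eta N J W0 P kk xi t n j w =
     localB g eta n (Wrv g eta N J W0 P kk xi t w) (P t (kk t n w) w) (\<lambda>j. xi t n j w) j"

text \<open>Index set of all elementary random quantities, and the sigma-algebras they generate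
  (used to express mutual independence).\<close>
definition fed_index :: "nat \<Rightarrow> nat \<Rightarrow> nat \<Rightarrow> ((nat \<times> nat) + (nat \<times> nat) + (nat \<times> nat \<times> nat)) set" where
  "fed_index K N J =
     Inl ` {(t, k). k < K} \<union> Inr ` Inl ` {(t, n). n < N}
     \<union> Inr ` Inr ` {(t, n, j). n < N \<and> j < J}"

definition fed_events ::
  "'w measure \<Rightarrow> 'a measure \<Rightarrow> (nat \<Rightarrow> nat \<Rightarrow> 'w \<Rightarrow> real^'dn^'r) \<Rightarrow> (nat \<Rightarrow> nat \<Rightarrow> 'w \<Rightarrow> nat)
    \<Rightarrow> (nat \<Rightarrow> nat \<Rightarrow> nat \<Rightarrow> 'w \<Rightarrow> 'a)
    \<Rightarrow> ((nat \<times> nat) + (nat \<times> nat) + (nat \<times> nat \<times> nat)) \<Rightarrow> 'w set set" where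
  "fed_events M S P kk xi i =
     (case i of
        Inl (t, k) \<Rightarrow> {P t k -` A \<inter> space M | A. A \<in> sets borel}
      | Inr (Inl (t, n)) \<Rightarrow> {kk t n -` A \<inter> space M | A. A \<in> sets (count_space UNIV)}
      | Inr (Inr (t, n, j)) \<Rightarrow> {xi t n j -` A \<inter> space M | A. A \<in> sets S})"

end

theory Submission
  imports Defs
begin

lemma (in prob_space) indep_pair_from_sets:
  assumes indep: "indep_sets E I" and a: "a \<in> I"
   and stable: "\<And>i. i \<in> I \<Longrightarrow> Int_stable (E i)"
   and Z: "Z \<in> measurable (sigma (space M) (\<Union>i\<in>I-{a}. E i)) T"
   and V: "V \<in> measurable M Sa" and Vev: "\<And>A. A \<in> sets Sa \<Longrightarrow> V -` A \<inter> space M \<in> E a"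
  shows "Z \<in> measurable M T"
    and "distr M T Z \<Otimes>\<^sub>M distr M Sa V = distr M (T \<Otimes>\<^sub>M Sa) (\<lambda>w. (Z w, V w))"
proof -
  have Eev: "\<And>i. i \<in> I \<Longrightarrow> E i \<subseteq> events" using indep unfolding indep_sets_def by auto
  have U: "(\<Union>i\<in>I-{a}. E i) \<subseteq> Pow (space M)" using Eev sets.sets_into_space by blast
  have sZ: "sets (sigma (space M) (\<Union>i\<in>I-{a}. E i)) = sigma_sets (space M) (\<Union>i\<in>I-{a}. E i)"
    using U by (rule sets_measure_of)
  have spZ: "space (sigma (space M) (\<Union>i\<in>I-{a}. E i)) = space M"
    using U by (rule space_measure_of)
  have sub: "sigma_sets (space M) (\<Union>i\<in>I-{a}. E i) \<subseteq> events"
    by (rule sets.sigma_sets_subset) (use Eev in auto)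
  have Zpre: "\<And>A. A \<in> sets T \<Longrightarrow> Z -` A \<inter> space M \<in> sigma_sets (space M) (\<Union>i\<in>I-{a}. E i)"
    using measurable_sets[OF Z] unfolding sZ spZ by simp
  show ZM: "Z \<in> measurable M T"
  proof (rule measurableI)
    show "\<And>x. x \<in> space M \<Longrightarrow> Z x \<in> space T"
      using measurable_space[OF Z] unfolding spZ by simp
    show "\<And>A. A \<in> sets T \<Longrightarrow> Z -` A \<inter> space M \<in> sets M"
      using Zpre sub by blast
  qed
  let ?I = "case_bool (I-{a}) {a}"
  have un: "(\<Union>j\<in>UNIV. ?I j) = I" using a by (auto simp: UNIV_bool)
  have ind2: "indep_sets (\<lambda>j. sigma_sets (space M) (\<Union>i\<in>?I j. E i)) UNIV"
  proof (rule indep_sets_collect_sigma)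
    show "indep_sets E (\<Union>j\<in>UNIV. ?I j)" using indep un by simp
    show "\<And>i j. j \<in> UNIV \<Longrightarrow> i \<in> ?I j \<Longrightarrow> Int_stable (E i)"
      using stable a by (auto split: bool.splits)
    show "disjoint_family_on ?I UNIV"
      by (auto simp: disjoint_family_on_def split: bool.splits)
  qed
  have prodeq: "prob (Z -` A \<inter> space M \<inter> (V -` B \<inter> space M)) = prob (Z -` A \<inter> space M) * prob (V -` B \<inter> space M)"
    if A: "A \<in> sets T" and B: "B \<in> sets Sa" for A B
  proof -
    let ?A = "case_bool (Z -` A \<inter> space M) (V -` B \<inter> space M)"
    have "prob (\<Inter>j\<in>UNIV. ?A j) = (\<Prod>j\<in>UNIV. prob (?A j))"
    proof (rule indep_setsD[OF ind2])
      show "\<forall>j\<in>UNIV. ?A j \<in> sigma_sets (space M) (\<Union>i\<in>?I j. E i)"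
      proof
        fix j :: bool show "?A j \<in> sigma_sets (space M) (\<Union>i\<in>?I j. E i)"
        proof (cases j)
          case True then show ?thesis using Zpre[OF A] by simp
        next
          case False then show ?thesis using Vev[OF B] by (simp add: sigma_sets.Basic)
        qed
      qed
    qed auto
    then show ?thesis by (simp add: UNIV_bool Int_commute)
  qed
  interpret PZ: prob_space "distr M T Z" by (rule prob_space_distr[OF ZM])
  interpret PV: prob_space "distr M Sa V" by (rule prob_space_distr[OF V])
  show "distr M T Z \<Otimes>\<^sub>M distr M Sa V = distr M (T \<Otimes>\<^sub>M Sa) (\<lambda>w. (Z w, V w))"
  proof (rule pair_measure_eqI)
    show "sigma_finite_measure (distr M T Z)" "sigma_finite_measure (distr M Sa V)"
      by unfold_locales
    show "sets (distr M T Z \<Otimes>\<^sub>M distr M Sa V) = sets (distr M (T \<Otimes>\<^sub>M Sa) (\<lambda>w. (Z w, V w)))"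
      by (simp cong: sets_pair_measure_cong)
  next
    fix A B assume A: "A \<in> sets (distr M T Z)" and B: "B \<in> sets (distr M Sa V)"
    then have A': "A \<in> sets T" and B': "B \<in> sets Sa" by auto
    have ZV: "(\<lambda>w. (Z w, V w)) \<in> measurable M (T \<Otimes>\<^sub>M Sa)" using ZM V by measurable
    have "emeasure (distr M (T \<Otimes>\<^sub>M Sa) (\<lambda>w. (Z w, V w))) (A \<times> B)
        = emeasure M ((\<lambda>w. (Z w, V w)) -` (A \<times> B) \<inter> space M)"
      using A' B' ZV by (subst emeasure_distr) auto
    also have "(\<lambda>w. (Z w, V w)) -` (A \<times> B) \<inter> space M = Z -` A \<inter> space M \<inter> (V -` B \<inter> space M)"
      by auto
    also have "emeasure M \<dots> = ennreal (prob (Z -` A \<inter> space M) * prob (V -` B \<inter> space M))"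
      by (simp add: emeasure_eq_measure prodeq[OF A' B'])
    also have "\<dots> = emeasure (distr M T Z) A * emeasure (distr M Sa V) B"
      using A' B' ZM V
      by (simp add: emeasure_distr emeasure_eq_measure ennreal_mult measurable_sets)
    finally show "emeasure (distr M T Z) A * emeasure (distr M Sa V) B
        = emeasure (distr M (T \<Otimes>\<^sub>M Sa) (\<lambda>w. (Z w, V w))) (A \<times> B)" by simp
  qed
qed

lemma (in prob_space) indep_nn_fubini:
  assumes rZ: "Z \<in> measurable M T" and rV: "V \<in> measurable M Sa"
    and eq: "distr M T Z \<Otimes>\<^sub>M distr M Sa V = distr M (T \<Otimes>\<^sub>M Sa) (\<lambda>x. (Z x, V x))"
    and f: "f \<in> borel_measurable (T \<Otimes>\<^sub>M Sa)"
  shows "(\<integral>\<^sup>+w. f (Z w, V w) \<partial>M) = (\<integral>\<^sup>+w. (\<integral>\<^sup>+v. f (Z w, v) \<partial>distr M Sa V) \<partial>M)"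
proof -
  interpret PZ: prob_space "distr M T Z" by (rule prob_space_distr[OF rZ])
  interpret PV: prob_space "distr M Sa V" by (rule prob_space_distr[OF rV])
  interpret pair_sigma_finite "distr M T Z" "distr M Sa V" ..
  have f': "f \<in> borel_measurable (distr M T Z \<Otimes>\<^sub>M distr M Sa V)"
    using f by (simp cong: measurable_cong_sets)
  have "(\<integral>\<^sup>+w. f (Z w, V w) \<partial>M) = (\<integral>\<^sup>+x. f x \<partial>distr M (T \<Otimes>\<^sub>M Sa) (\<lambda>x. (Z x, V x)))"
    using rZ rV f by (subst nn_integral_distr) auto
  also have "\<dots> = (\<integral>\<^sup>+x. f x \<partial>(distr M T Z \<Otimes>\<^sub>M distr M Sa V))" by (simp add: eq)
  also have "\<dots> = (\<integral>\<^sup>+z. (\<integral>\<^sup>+v. f (z, v) \<partial>distr M Sa V) \<partial>distr M T Z)"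
    by (rule PV.nn_integral_fst[symmetric, OF f'])
  also have "\<dots> = (\<integral>\<^sup>+w. (\<integral>\<^sup>+v. f (Z w, v) \<partial>distr M Sa V) \<partial>M)"
  proof -
    have m: "(\<lambda>z. \<integral>\<^sup>+ v. f (z, v) \<partial>distr M Sa V) \<in> borel_measurable T"
      using PV.borel_measurable_nn_integral_fst[OF f'] by (simp cong: measurable_cong_sets)
    have m': "(\<lambda>z. \<integral>\<^sup>+ v. f (z, v) \<partial>distr M Sa V) \<in> borel_measurable (distr M T Z)"
      using m by simp
    show ?thesis by (rule nn_integral_distr[OF rZ m'])
  qed
  finally show ?thesis .
qed

lemma (in prob_space) indep_fubini:
  fixes f :: "_ \<Rightarrow> 'b::{banach, second_countable_topology}"
  assumes rZ: "Z \<in> measurable M T" and rV: "V \<in> measurable M Sa"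
    and eq: "distr M T Z \<Otimes>\<^sub>M distr M Sa V = distr M (T \<Otimes>\<^sub>M Sa) (\<lambda>x. (Z x, V x))"
    and f: "f \<in> borel_measurable (T \<Otimes>\<^sub>M Sa)"
    and int: "integrable M (\<lambda>w. f (Z w, V w))"
  shows "(\<integral>w. f (Z w, V w) \<partial>M) = (\<integral>w. (\<integral>v. f (Z w, v) \<partial>distr M Sa V) \<partial>M)"
    and "AE w in M. integrable (distr M Sa V) (\<lambda>v. f (Z w, v))"
proof -
  interpret PZ: prob_space "distr M T Z" by (rule prob_space_distr[OF rZ])
  interpret PV: prob_space "distr M Sa V" by (rule prob_space_distr[OF rV])
  interpret pair_sigma_finite "distr M T Z" "distr M Sa V" ..
  have f': "f \<in> borel_measurable (distr M T Z \<Otimes>\<^sub>M distr M Sa V)"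
    using f by (simp cong: measurable_cong_sets)
  have mZV: "(\<lambda>x. (Z x, V x)) \<in> measurable M (T \<Otimes>\<^sub>M Sa)" using rZ rV by auto
  have intD: "integrable (distr M (T \<Otimes>\<^sub>M Sa) (\<lambda>x. (Z x, V x))) f"
    using int f mZV by (subst integrable_distr_eq) auto
  then have intP: "integrable (distr M T Z \<Otimes>\<^sub>M distr M Sa V) f" by (simp add: eq)
  have "(\<integral>w. f (Z w, V w) \<partial>M) = (\<integral>x. f x \<partial>distr M (T \<Otimes>\<^sub>M Sa) (\<lambda>x. (Z x, V x)))"
    using mZV f by (subst integral_distr) auto
  also have "\<dots> = (\<integral>x. f x \<partial>(distr M T Z \<Otimes>\<^sub>M distr M Sa V))" by (simp add: eq)
  also have "\<dots> = (\<integral>z. (\<integral>v. f (z, v) \<partial>distr M Sa V) \<partial>distr M T Z)"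
    by (rule integral_fst'[symmetric, OF intP])
  also have "\<dots> = (\<integral>w. (\<integral>v. f (Z w, v) \<partial>distr M Sa V) \<partial>M)"
  proof -
    have m: "(\<lambda>z. \<integral> v. f (z, v) \<partial>distr M Sa V) \<in> borel_measurable T"
      using PV.borel_measurable_lebesgue_integral[of "\<lambda>z v. f (z, v)" "distr M T Z"] f'
      by (simp cong: measurable_cong_sets)
    show ?thesis by (rule integral_distr[OF rZ m])
  qed
  finally show "(\<integral>w. f (Z w, V w) \<partial>M) = (\<integral>w. (\<integral>v. f (Z w, v) \<partial>distr M Sa V) \<partial>M)" .
  have "AE z in distr M T Z. integrable (distr M Sa V) (\<lambda>v. f (z, v))"
    by (rule AE_integrable_fst'[OF intP])
  then show "AE w in M. integrable (distr M Sa V) (\<lambda>v. f (Z w, v))"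
    by (rule AE_distrD[OF rZ])
qed

lemma continuous_on_matmul:
  "continuous_on UNIV (\<lambda>p::(real^'n^'m) \<times> (real^'k^'n). fst p ** snd p)"
  unfolding matrix_matrix_mult_def
  by (intro continuous_intros continuous_on_vec_lambda continuous_on_sum)

lemma measurable_matmul[measurable]:
  fixes f :: "'x \<Rightarrow> real^'n^'m" and g :: "'x \<Rightarrow> real^'k^'n"
  assumes [measurable]: "f \<in> borel_measurable M" "g \<in> borel_measurable M"
  shows "(\<lambda>x. f x ** g x) \<in> borel_measurable M"
proof -
  have c: "(\<lambda>p::(real^'n^'m) \<times> (real^'k^'n). fst p ** snd p) \<in> borel_measurable borel"
    by (rule borel_measurable_continuous_onI[OF continuous_on_matmul])
  have "(\<lambda>x. (f x, g x)) \<in> borel_measurable M"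
    unfolding borel_prod[symmetric] by measurable
  from measurable_compose[OF this c] show ?thesis by simp
qed

lemma continuous_on_transpose:
  "continuous_on UNIV (\<lambda>A::real^'n^'m. transpose A)"
  unfolding transpose_def
  by (intro continuous_intros continuous_on_vec_lambda)

lemma measurable_transpose[measurable]:
  fixes f :: "'x \<Rightarrow> real^'n^'m"
  assumes [measurable]: "f \<in> borel_measurable M"
  shows "(\<lambda>x. transpose (f x)) \<in> borel_measurable M"
  using measurable_compose[OF assms borel_measurable_continuous_onI[OF continuous_on_transpose]]
  by simp

lemma inner_mat_sum: "inner (X::real^'n^'m) Y = (\<Sum>i\<in>UNIV. \<Sum>j\<in>UNIV. X$i$j * Y$i$j)"
  by (simp add: inner_vec_def)

lemma inner_matmul_right:
  fixes X :: "real^'n^'m" and Y :: "real^'k^'m" and B :: "real^'n^'k"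
  shows "inner X (Y ** B) = inner (X ** transpose B) Y"
proof -
  have "inner X (Y ** B) = (\<Sum>i\<in>UNIV. \<Sum>j\<in>UNIV. \<Sum>l\<in>UNIV. X$i$j * (Y$i$l * B$l$j))"
    by (simp add: inner_mat_sum matrix_matrix_mult_def sum_distrib_left)
  also have "\<dots> = (\<Sum>i\<in>UNIV. \<Sum>l\<in>UNIV. \<Sum>j\<in>UNIV. X$i$j * (Y$i$l * B$l$j))"
    by (rule sum.cong[OF refl], rule sum.swap)
  also have "\<dots> = inner (X ** transpose B) Y"
    by (simp add: inner_mat_sum matrix_matrix_mult_def transpose_def sum_distrib_left mult_ac)
  finally show ?thesis .
qed

lemma transpose_matmul: "transpose (A ** B) = transpose B ** transpose (A::real^'n^'m)"
  by (rule matrix_transpose_mul)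

lemma PtP_sq:
  fixes P :: "real^'n^'r"
  assumes "P ** transpose P = c *\<^sub>R mat 1"
  shows "(transpose P ** P) ** (transpose P ** P) = c *\<^sub>R (transpose P ** P)"
proof -
  have "(transpose P ** P) ** (transpose P ** P) = transpose P ** (P ** transpose P) ** P"
    by (simp add: matrix_mul_assoc)
  also have "\<dots> = transpose P ** (c *\<^sub>R mat 1) ** P" by (simp add: assms)
  also have "\<dots> = c *\<^sub>R (transpose P ** P)"
    by (simp add: matrix_scaleR_vector_ac scalar_matrix_assoc matrix_scalar_ac)
  finally show ?thesis .
qed

lemma norm_sum_sq_le:
  fixes x :: "'i \<Rightarrow> 'v::real_normed_vector"
  assumes "finite I"
  shows "(norm (\<Sum>i\<in>I. x i))\<^sup>2 \<le> real (card I) * (\<Sum>i\<in>I. (norm (x i))\<^sup>2)"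
proof -
  have "(norm (\<Sum>i\<in>I. x i))\<^sup>2 \<le> (\<Sum>i\<in>I. norm (x i))\<^sup>2"
    by (rule power_mono[OF norm_sum norm_ge_zero])
  also have "\<dots> \<le> (\<Sum>i\<in>I. (norm (x i))\<^sup>2) * real (card I)"
    by (rule sum_squared_le_sum_of_squares)
  finally show ?thesis by (simp add: mult.commute)
qed

lemma matmul_add_left:
  fixes X Y :: "real^'n^'m" and A :: "real^'k^'n"
  shows "(X + Y) ** A = X ** A + Y ** A"
  by (simp add: matrix_matrix_mult_def vec_eq_iff sum.distrib distrib_right)

lemma matmul_scaleR_right:
  fixes X :: "real^'n^'m" and A :: "real^'k^'n"
  shows "X ** (a *\<^sub>R A) = a *\<^sub>R (X ** A)"
  by (simp add: matrix_matrix_mult_def vec_eq_iff sum_distrib_left mult_ac)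

lemma matmul_sum_left:
  fixes X :: "'i \<Rightarrow> real^'n^'m" and A :: "real^'k^'n"
  shows "(\<Sum>i\<in>I. X i) ** A = (\<Sum>i\<in>I. X i ** A)"
proof (induction I rule: infinite_finite_induct)
  case (infinite I) then show ?case by (simp add: matrix_matrix_mult_def vec_eq_iff)
next
  case empty then show ?case by (simp add: matrix_matrix_mult_def vec_eq_iff)
next
  case (insert x F) then show ?case by (simp add: matmul_add_left)
qed

lemma matmul_diff_left:
  fixes X Y :: "real^'n^'m" and A :: "real^'k^'n"
  shows "(X - Y) ** A = X ** A - Y ** A"
  by (simp add: matrix_matrix_mult_def vec_eq_iff sum_subtractf left_diff_distrib)

lemma matmul_scaleR_left:
  fixes X :: "real^'n^'m" and A :: "real^'k^'n"
  shows "(a *\<^sub>R X) ** A = a *\<^sub>R (X ** A)"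
  by (simp add: matrix_matrix_mult_def vec_eq_iff sum_distrib_left mult.assoc)

lemma matmul_zero_left: "(0::real^'n^'m) ** (A::real^'k^'n) = 0"
  by (simp add: matrix_matrix_mult_def vec_eq_iff)

lemma normA_sq:
  fixes X :: "real^'n^'m" and A :: "real^'n^'n"
  assumes AA: "A ** A = c *\<^sub>R A" and At: "transpose A = A"
  shows "(norm (X ** A))\<^sup>2 = c * inner X (X ** A)"
proof -
  have "(norm (X ** A))\<^sup>2 = inner (X ** A) (X ** A)" by (simp add: power2_norm_eq_inner)
  also have "\<dots> = inner ((X ** A) ** transpose A) X" by (rule inner_matmul_right)
  also have "\<dots> = inner (c *\<^sub>R (X ** A)) X"
    by (simp add: At AA matrix_mul_assoc[symmetric] matmul_scaleR_right matmul_scaleR_left)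
  also have "\<dots> = c * inner X (X ** A)" by (simp add: inner_commute)
  finally show ?thesis .
qed

lemma normA_le:
  fixes X :: "real^'n^'m" and A :: "real^'n^'n"
  assumes AA: "A ** A = c *\<^sub>R A" and At: "transpose A = A" and c: "c \<ge> 0"
  shows "norm (X ** A) \<le> c * norm X"
proof (cases "norm (X ** A) = 0")
  case True then show ?thesis using c by simp
next
  case False
  have "(norm (X ** A))\<^sup>2 = c * inner X (X ** A)" by (rule normA_sq[OF AA At])
  also have "\<dots> \<le> c * (norm X * norm (X ** A))"
    by (rule mult_left_mono[OF _ c]) (metis Cauchy_Schwarz_ineq2 abs_le_D1)
  finally have "norm (X ** A) * norm (X ** A) \<le> (c * norm X) * norm (X ** A)"
    by (simp add: power2_eq_square mult_ac)
  then show ?thesis using False by (simp add: mult_le_cancel_right)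
qed

lemma innerA_sym:
  fixes G X :: "real^'n^'m" and A :: "real^'n^'n"
  assumes At: "transpose A = A"
  shows "inner G (X ** A) = inner (G ** A) X"
  using inner_matmul_right[of G X A] At by simp

lemma avg_norm_sq:
  fixes x :: "nat \<Rightarrow> 'v::real_normed_vector"
  assumes N: "N \<ge> 1"
  shows "(norm ((1 / real N) *\<^sub>R (\<Sum>n<N. x n)))\<^sup>2 \<le> (1 / real N) * (\<Sum>n<N. (norm (x n))\<^sup>2)"
proof -
  have "(norm ((1 / real N) *\<^sub>R (\<Sum>n<N. x n)))\<^sup>2 = (1 / real N)\<^sup>2 * (norm (\<Sum>n<N. x n))\<^sup>2"
    by (simp add: power_divide)
  also have "\<dots> \<le> (1 / real N)\<^sup>2 * (real N * (\<Sum>n<N. (norm (x n))\<^sup>2))"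
    using norm_sum_sq_le[of "{..<N}" x] by (intro mult_left_mono) auto
  also have "\<dots> = (1 / real N) * (\<Sum>n<N. (norm (x n))\<^sup>2)"
    using N by (simp add: power2_eq_square field_simps)
  finally show ?thesis .
qed

lemma norm_add_sq_le:
  fixes x y :: "'v::real_normed_vector"
  shows "(norm (x + y))\<^sup>2 \<le> 2 * (norm x)\<^sup>2 + 2 * (norm y)\<^sup>2"
proof -
  have "(norm (x + y))\<^sup>2 \<le> (norm x + norm y)\<^sup>2"
    by (rule power_mono[OF norm_triangle_ineq norm_ge_zero])
  also have "\<dots> \<le> 2 * (norm x)\<^sup>2 + 2 * (norm y)\<^sup>2"
  proof -
    have "0 \<le> (norm x - norm y)\<^sup>2" by simp
    then show ?thesis unfolding power2_sum power2_diff by linarith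
  qed
  finally show ?thesis .
qed

lemma young_c:
  fixes a b c :: real
  assumes c: "c > 0"
  shows "a * b \<le> a\<^sup>2 / (2 * c) + c * b\<^sup>2 / 2"
proof -
  have "0 \<le> (a - c * b)\<^sup>2" by simp
  then have "2 * c * (a * b) \<le> a\<^sup>2 + c\<^sup>2 * b\<^sup>2" by (simp add: power2_eq_square algebra_simps)
  then show ?thesis using c by (simp add: field_simps power2_eq_square)
qed

lemma sum_rearr:
  fixes a :: "nat \<Rightarrow> real" and u :: "nat \<Rightarrow> nat \<Rightarrow> real"
  shows "(1/real N) * (\<Sum>n<N. \<Sum>j<J. a n / 2 + b * u n j / 2)
     = real J / 2 * ((1/real N) * (\<Sum>n<N. a n)) + b / 2 * ((1/real N) * (\<Sum>n<N. \<Sum>j<J. u n j))"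
proof -
  have "(\<Sum>n<N. \<Sum>j<J. a n / 2 + b * u n j / 2) = (\<Sum>n<N. real J / 2 * a n) + (\<Sum>n<N. \<Sum>j<J. b / 2 * u n j)"
    by (simp add: sum.distrib)
  also have "\<dots> = real J / 2 * (\<Sum>n<N. a n) + b / 2 * (\<Sum>n<N. \<Sum>j<J. u n j)"
    by (simp only: sum_distrib_left)
  finally show ?thesis by (simp add: algebra_simps)
qed

lemma det_bound:
  fixes G Dl E :: "real^'dn^'dm" and gr :: "nat \<Rightarrow> real^'dn^'dm"
    and gl e U :: "nat \<Rightarrow> nat \<Rightarrow> real^'dn^'dm" and A :: "nat \<Rightarrow> real^'dn^'dn"
  assumes N: "N \<ge> 1" and c: "c > 0" and eta: "eta > 0" and L: "L \<ge> 0"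
    and AA: "\<And>n. n < N \<Longrightarrow> A n ** A n = c *\<^sub>R A n"
    and At: "\<And>n. n < N \<Longrightarrow> transpose (A n) = A n"
    and lip: "\<And>n j. n < N \<Longrightarrow> j < J \<Longrightarrow> norm (gl n j - gr n) \<le> L * norm (U n j)"
    and G: "G = (1 / real N) *\<^sub>R (\<Sum>n<N. gr n)"
    and E: "E = (1 / real N) *\<^sub>R (\<Sum>n<N. \<Sum>j<J. e n j ** A n)"
    and Dl: "Dl = (- eta / real N) *\<^sub>R (\<Sum>n<N. \<Sum>j<J. (gl n j + e n j) ** A n)"
  shows "inner G Dl + L / 2 * (norm Dl)\<^sup>2 \<le>
      - eta * real J * ((1 / real N) * (\<Sum>n<N. inner G (gr n ** A n)))
      + eta * real J / 2 * ((1 / real N) * (\<Sum>n<N. inner G (G ** A n)))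
      + (eta * c * L\<^sup>2 / 2 + 2 * L^3 * eta\<^sup>2 * real J * c\<^sup>2)
          * ((1 / real N) * (\<Sum>n<N. \<Sum>j<J. (norm (U n j))\<^sup>2))
      - eta * inner G E
      + 2 * L * eta\<^sup>2 * (real J)\<^sup>2 * c * ((1 / real N) * (\<Sum>n<N. inner (gr n) (gr n ** A n)))
      + L * eta\<^sup>2 * (norm E)\<^sup>2"
proof -
  define D1 where "D1 = (1 / real N) *\<^sub>R (\<Sum>n<N. \<Sum>j<J. gr n ** A n)"
  define D2 where "D2 = (1 / real N) *\<^sub>R (\<Sum>n<N. \<Sum>j<J. (gl n j - gr n) ** A n)"
  define X1 where "X1 = (1 / real N) * (\<Sum>n<N. inner G (gr n ** A n))"
  define X2 where "X2 = (1 / real N) * (\<Sum>n<N. inner G (G ** A n))"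
  define XQ where "XQ = (1 / real N) * (\<Sum>n<N. \<Sum>j<J. (norm (U n j))\<^sup>2)"
  define X4 where "X4 = (1 / real N) * (\<Sum>n<N. inner (gr n) (gr n ** A n))"
  have split: "\<And>n j. (gl n j + e n j) ** A n = gr n ** A n + (gl n j - gr n) ** A n + e n j ** A n"
    by (simp add: matmul_add_left matmul_diff_left)
  have DlD: "Dl = - eta *\<^sub>R (D1 + D2 + E)"
    unfolding Dl D1_def D2_def E split
    by (simp add: sum.distrib scaleR_add_right)
  have I1: "inner G D1 = real J * X1"
    unfolding D1_def X1_def by (simp add: inner_sum_right sum_constant_scaleR sum_distrib_left del: sum_constant)
  have trm: "- inner G ((gl n j - gr n) ** A n) \<le> inner G (G ** A n) / 2 + c * L\<^sup>2 * (norm (U n j))\<^sup>2 / 2"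
    if n: "n < N" and j: "j < J" for n j
  proof -
    let ?Y = "gl n j - gr n"
    have s1: "- inner G (?Y ** A n) = - inner (G ** A n) ?Y"
      using innerA_sym[OF At[OF n], of G ?Y] by simp
    have s2: "- inner (G ** A n) ?Y \<le> norm (G ** A n) * norm ?Y"
      by (metis Cauchy_Schwarz_ineq2 abs_le_D2 neg_le_iff_le)
    have s3: "norm (G ** A n) * norm ?Y \<le> (norm (G ** A n))\<^sup>2 / (2 * c) + c * (norm ?Y)\<^sup>2 / 2"
      by (rule young_c[OF c])
    have s4: "(norm (G ** A n))\<^sup>2 / (2 * c) = inner G (G ** A n) / 2"
      using normA_sq[OF AA[OF n] At[OF n], of G] c by simp
    have s5: "(norm ?Y)\<^sup>2 \<le> L\<^sup>2 * (norm (U n j))\<^sup>2"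
    proof -
      have "(norm ?Y)\<^sup>2 \<le> (L * norm (U n j))\<^sup>2" by (rule power_mono[OF lip[OF n j] norm_ge_zero])
      then show ?thesis by (simp add: power_mult_distrib)
    qed
    have s6: "c * (norm ?Y)\<^sup>2 / 2 \<le> c * L\<^sup>2 * (norm (U n j))\<^sup>2 / 2"
      using mult_left_mono[OF s5, of c] c by (simp add: mult.assoc)
    show ?thesis using s1 s2 s3 s4 s6 by linarith
  qed
  have I2: "- inner G D2 \<le> real J / 2 * X2 + c * L\<^sup>2 / 2 * XQ"
  proof -
    have "- inner G D2 = (1 / real N) * (\<Sum>n<N. \<Sum>j<J. - inner G ((gl n j - gr n) ** A n))"
      unfolding D2_def by (simp add: inner_sum_right sum_negf)
    also have "\<dots> \<le> (1 / real N) * (\<Sum>n<N. \<Sum>j<J. inner G (G ** A n) / 2 + c * L\<^sup>2 * (norm (U n j))\<^sup>2 / 2)"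
    proof (rule mult_left_mono)
      show "(\<Sum>n<N. \<Sum>j<J. - inner G ((gl n j - gr n) ** A n))
          \<le> (\<Sum>n<N. \<Sum>j<J. inner G (G ** A n) / 2 + c * L\<^sup>2 * (norm (U n j))\<^sup>2 / 2)"
      proof (rule sum_mono)
        fix n assume n: "n \<in> {..<N}"
        show "(\<Sum>j<J. - inner G ((gl n j - gr n) ** A n))
          \<le> (\<Sum>j<J. inner G (G ** A n) / 2 + c * L\<^sup>2 * (norm (U n j))\<^sup>2 / 2)"
        proof (rule sum_mono)
          fix j assume j: "j \<in> {..<J}"
          from n j have n': "n < N" and j': "j < J" by auto
          show "- inner G ((gl n j - gr n) ** A n) \<le> inner G (G ** A n) / 2 + c * L\<^sup>2 * (norm (U n j))\<^sup>2 / 2"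
            by (rule trm[OF n' j'])
        qed
      qed
    qed simp
    also have "\<dots> = real J / 2 * X2 + c * L\<^sup>2 / 2 * XQ"
      unfolding X2_def XQ_def by (rule sum_rearr)
    finally show ?thesis .
  qed
  have N1: "(norm D1)\<^sup>2 \<le> (real J)\<^sup>2 * c * X4"
  proof -
    have "D1 = real J *\<^sub>R ((1 / real N) *\<^sub>R (\<Sum>n<N. gr n ** A n))"
      unfolding D1_def by (simp add: scaleR_sum_right sum_constant_scaleR del: sum_constant)
    then have "(norm D1)\<^sup>2 = (real J)\<^sup>2 * (norm ((1 / real N) *\<^sub>R (\<Sum>n<N. gr n ** A n)))\<^sup>2"
      by (simp only: norm_scaleR power_mult_distrib power2_abs)
    also have "\<dots> \<le> (real J)\<^sup>2 * ((1 / real N) * (\<Sum>n<N. (norm (gr n ** A n))\<^sup>2))"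
      by (intro mult_left_mono avg_norm_sq N) simp
    also have "(\<Sum>n<N. (norm (gr n ** A n))\<^sup>2) = (\<Sum>n<N. c * inner (gr n) (gr n ** A n))"
      by (rule sum.cong[OF refl]) (simp add: normA_sq[OF AA At])
    finally show ?thesis unfolding X4_def by (simp add: sum_distrib_left[symmetric] mult_ac)
  qed
  have N2: "(norm D2)\<^sup>2 \<le> real J * c\<^sup>2 * L\<^sup>2 * XQ"
  proof -
    have "(norm D2)\<^sup>2 \<le> (1 / real N) * (\<Sum>n<N. (norm (\<Sum>j<J. (gl n j - gr n) ** A n))\<^sup>2)"
      unfolding D2_def by (rule avg_norm_sq[OF N])
    also have "\<dots> \<le> (1 / real N) * (\<Sum>n<N. real J * (\<Sum>j<J. c\<^sup>2 * L\<^sup>2 * (norm (U n j))\<^sup>2))"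
    proof (intro mult_left_mono sum_mono)
      fix n assume n: "n \<in> {..<N}"
      have "(norm (\<Sum>j<J. (gl n j - gr n) ** A n))\<^sup>2 \<le> real J * (\<Sum>j<J. (norm ((gl n j - gr n) ** A n))\<^sup>2)"
        using norm_sum_sq_le[of "{..<J}"] by simp
      also have "\<dots> \<le> real J * (\<Sum>j<J. c\<^sup>2 * L\<^sup>2 * (norm (U n j))\<^sup>2)"
      proof (intro mult_left_mono sum_mono)
        fix j assume j: "j \<in> {..<J}"
        have "norm ((gl n j - gr n) ** A n) \<le> c * norm (gl n j - gr n)"
          using normA_le[OF AA At] n c by auto
        also have "\<dots> \<le> c * (L * norm (U n j))" using lip n j c by (auto intro: mult_left_mono)
        finally have "(norm ((gl n j - gr n) ** A n))\<^sup>2 \<le> (c * (L * norm (U n j)))\<^sup>2"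
          by (rule power_mono[OF _ norm_ge_zero])
        then show "(norm ((gl n j - gr n) ** A n))\<^sup>2 \<le> c\<^sup>2 * L\<^sup>2 * (norm (U n j))\<^sup>2"
          by (simp add: power_mult_distrib)
      qed simp
      finally show "(norm (\<Sum>j<J. (gl n j - gr n) ** A n))\<^sup>2 \<le> real J * (\<Sum>j<J. c\<^sup>2 * L\<^sup>2 * (norm (U n j))\<^sup>2)" .
    qed simp
    also have "\<dots> = real J * c\<^sup>2 * L\<^sup>2 * XQ"
      unfolding XQ_def by (simp add: sum_distrib_left[symmetric] mult_ac)
    finally show ?thesis .
  qed
  have N3: "(norm Dl)\<^sup>2 \<le> eta\<^sup>2 * (4 * (norm D1)\<^sup>2 + 4 * (norm D2)\<^sup>2 + 2 * (norm E)\<^sup>2)"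
  proof -
    have "(norm Dl)\<^sup>2 = eta\<^sup>2 * (norm (D1 + D2 + E))\<^sup>2"
      unfolding DlD using eta by (simp add: power_mult_distrib)
    also have "(norm (D1 + D2 + E))\<^sup>2 \<le> 4 * (norm D1)\<^sup>2 + 4 * (norm D2)\<^sup>2 + 2 * (norm E)\<^sup>2"
      using norm_add_sq_le[of "D1 + D2" E] norm_add_sq_le[of D1 D2] by linarith
    then have "eta\<^sup>2 * (norm (D1 + D2 + E))\<^sup>2 \<le> eta\<^sup>2 * (4 * (norm D1)\<^sup>2 + 4 * (norm D2)\<^sup>2 + 2 * (norm E)\<^sup>2)"
      by (rule mult_left_mono) simp
    finally show ?thesis .
  qed
  have inner_Dl: "inner G Dl = - eta * (real J * X1) - eta * inner G D2 - eta * inner G E"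
    unfolding DlD by (simp add: inner_add_right I1 algebra_simps)
  have "L / 2 * (norm Dl)\<^sup>2 \<le> L / 2 * (eta\<^sup>2 * (4 * (norm D1)\<^sup>2 + 4 * (norm D2)\<^sup>2 + 2 * (norm E)\<^sup>2))"
    using N3 L by (intro mult_left_mono) auto
  moreover have "L * eta\<^sup>2 * (norm D1)\<^sup>2 \<le> L * eta\<^sup>2 * ((real J)\<^sup>2 * c * X4)"
    using N1 L by (intro mult_left_mono) auto
  moreover have "L * eta\<^sup>2 * (norm D2)\<^sup>2 \<le> L * eta\<^sup>2 * (real J * c\<^sup>2 * L\<^sup>2 * XQ)"
    using N2 L by (intro mult_left_mono) auto
  moreover have "eta * (- inner G D2) \<le> eta * (real J / 2 * X2 + c * L\<^sup>2 / 2 * XQ)"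
    using I2 eta by (intro mult_left_mono) auto
  ultimately show ?thesis
    unfolding X1_def[symmetric] X2_def[symmetric] XQ_def[symmetric] X4_def[symmetric] inner_Dl
    by (simp add: algebra_simps power2_eq_square power3_eq_cube)
qed

lemma descent_lemma:
  fixes f :: "'v::real_inner \<Rightarrow> real" and gr :: "'v \<Rightarrow> 'v"
  assumes deriv: "\<And>W. (f has_derivative (\<lambda>H. gr W \<bullet> H)) (at W)"
    and lip: "\<And>W1 W2. norm (gr W1 - gr W2) \<le> L * norm (W1 - W2)"
  shows "f (x + d) \<le> f x + inner (gr x) d + L / 2 * (norm d)\<^sup>2"
proof -
  define \<psi> where "\<psi> s = f (x + s *\<^sub>R d) - s * inner (gr x) d - L / 2 * s\<^sup>2 * (norm d)\<^sup>2" for s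
  have h1: "((\<lambda>s. f (x + s *\<^sub>R d)) has_real_derivative inner (gr (x + s *\<^sub>R d)) d) (at s)" for s
  proof -
    have a: "((\<lambda>s. x + s *\<^sub>R d) has_derivative (\<lambda>h. h *\<^sub>R d)) (at s)"
      by (auto intro!: derivative_eq_intros)
    have b: "((\<lambda>s. f (x + s *\<^sub>R d)) has_derivative (\<lambda>h. gr (x + s *\<^sub>R d) \<bullet> (h *\<^sub>R d))) (at s)"
      using has_derivative_compose[OF a deriv] by simp
    have e: "(\<lambda>h. gr (x + s *\<^sub>R d) \<bullet> (h *\<^sub>R d)) = (*) (inner (gr (x + s *\<^sub>R d)) d)"
      by (auto simp: fun_eq_iff mult.commute)
    show ?thesis unfolding has_field_derivative_def using b e by simp
  qed
  have h2: "((\<lambda>s. s * inner (gr x) d) has_real_derivative inner (gr x) d) (at s)" for s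
    by (auto intro!: derivative_eq_intros)
  have h3: "((\<lambda>s. L / 2 * s\<^sup>2 * (norm d)\<^sup>2) has_real_derivative L * s * (norm d)\<^sup>2) (at s)" for s
    by (auto intro!: derivative_eq_intros simp: power2_eq_square)
  have d\<psi>: "(\<psi> has_real_derivative (inner (gr (x + s *\<^sub>R d)) d - inner (gr x) d - L * s * (norm d)\<^sup>2)) (at s)" for s
    unfolding \<psi>_def[abs_def] by (rule DERIV_diff[OF DERIV_diff[OF h1 h2] h3])
  have neg: "inner (gr (x + s *\<^sub>R d)) d - inner (gr x) d - L * s * (norm d)\<^sup>2 \<le> 0" if s: "0 \<le> s" for s
  proof -
    have "inner (gr (x + s *\<^sub>R d)) d - inner (gr x) d = inner (gr (x + s *\<^sub>R d) - gr x) d"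
      by (simp add: inner_diff_left)
    also have "\<dots> \<le> norm (gr (x + s *\<^sub>R d) - gr x) * norm d" by (rule norm_cauchy_schwarz)
    also have "\<dots> \<le> (L * norm (s *\<^sub>R d)) * norm d"
      using lip[of "x + s *\<^sub>R d" x] by (intro mult_right_mono) auto
    also have "\<dots> = L * s * (norm d)\<^sup>2" using s by (simp add: power2_eq_square)
    finally show ?thesis by simp
  qed
  have "\<psi> 1 \<le> \<psi> 0"
  proof (rule DERIV_nonpos_imp_nonincreasing[of 0 1 \<psi>])
    fix s :: real assume "0 \<le> s" "s \<le> 1"
    then show "\<exists>y. DERIV \<psi> s :> y \<and> y \<le> 0" using d\<psi>[of s] neg[of s] by blast
  qed simp
  then show ?thesis unfolding \<psi>_def by simp
qed

locale fedK =
  fixes M :: "'w measure" and S :: "'a measure"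
    and Fn :: "nat \<Rightarrow> real^'dn^'dm \<Rightarrow> real"
    and gradFn :: "nat \<Rightarrow> real^'dn^'dm \<Rightarrow> real^'dn^'dm"
    and g :: "nat \<Rightarrow> real^'dn^'dm \<Rightarrow> 'a \<Rightarrow> real^'dn^'dm"
    and P :: "nat \<Rightarrow> nat \<Rightarrow> 'w \<Rightarrow> real^'dn^'r"
    and kk :: "nat \<Rightarrow> nat \<Rightarrow> 'w \<Rightarrow> nat"
    and xi :: "nat \<Rightarrow> nat \<Rightarrow> nat \<Rightarrow> 'w \<Rightarrow> 'a"
    and W0 :: "real^'dn^'dm"
    and N K J t :: nat
    and L eta sigma vsig :: real
  assumes M: "prob_space M"
    and N: "N \<ge> 1" and K: "K \<ge> 1" and J: "J \<ge> 1"
    and deriv: "\<And>n W. n < N \<Longrightarrow> (Fn n has_derivative (\<lambda>H. gradFn n W \<bullet> H)) (at W)"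
    and smooth: "\<And>n W1 W2. n < N \<Longrightarrow> norm (gradFn n W1 - gradFn n W2) \<le> L * norm (W1 - W2)"
    and g_meas: "\<And>n. n < N \<Longrightarrow> (\<lambda>p. g n (fst p) (snd p)) \<in> borel_measurable (borel \<Otimes>\<^sub>M S)"
    and xi_meas: "\<And>t n j. n < N \<Longrightarrow> j < J \<Longrightarrow> xi t n j \<in> measurable M S"
    and unbiased: "\<And>t n j W. n < N \<Longrightarrow> j < J \<Longrightarrow>
        integrable M (\<lambda>w. g n W (xi t n j w)) \<and> (\<integral>w. g n W (xi t n j w) \<partial>M) = gradFn n W"
    and variance: "\<And>t n j W. n < N \<Longrightarrow> j < J \<Longrightarrow>
        integrable M (\<lambda>w. (norm (g n W (xi t n j w) - gradFn n W))\<^sup>2) \<and>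
        (\<integral>w. (norm (g n W (xi t n j w) - gradFn n W))\<^sup>2 \<partial>M) \<le> sigma\<^sup>2"
    and vsig: "vsig \<ge> 0"
    and hetero: "\<And>W. (\<Sum>n<N. (norm (gradFn n W))\<^sup>2) / real N \<le> vsig\<^sup>2 + (norm (avgGrad N gradFn W))\<^sup>2"
    and P_meas: "\<And>t k. k < K \<Longrightarrow> P t k \<in> borel_measurable M"
    and P_orth: "\<And>t k. k < K \<Longrightarrow>
        AE w in M. P t k w ** transpose (P t k w) = (real CARD('dn) / real CARD('r)) *\<^sub>R mat 1"
    and P_mean: "\<And>t k. k < K \<Longrightarrow> (\<integral>w. transpose (P t k w) ** P t k w \<partial>M) = mat 1"
    and kk_meas: "\<And>t n. n < N \<Longrightarrow> kk t n \<in> measurable M (count_space UNIV)"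
    and kk_range: "\<And>t n w. n < N \<Longrightarrow> w \<in> space M \<Longrightarrow> kk t n w < K"
    and indep: "prob_space.indep_sets M (fed_events M S P kk xi) (fed_index K N J)"
    and eta_pos: "0 < eta"
    and eta_le: "eta \<le> real CARD('r) / (16 * L * real CARD('dn) * real J)"
begin

sublocale prob_space M by (rule M)

definition Msub :: "((nat \<times> nat) + (nat \<times> nat) + (nat \<times> nat \<times> nat)) set \<Rightarrow> 'w measure" where
  "Msub I = measure_of (space M) (\<Union>i\<in>I. fed_events M S P kk xi i) (\<lambda>_. 0)"

lemma fed_events_Pow: "i \<in> fed_index K N J \<Longrightarrow> fed_events M S P kk xi i \<subseteq> Pow (space M)"
  by (auto simp: fed_events_def split: sum.splits prod.splits)

lemma Msub_space: "I \<subseteq> fed_index K N J \<Longrightarrow> space (Msub I) = space M"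
  unfolding Msub_def by (rule space_measure_of) (use fed_events_Pow in blast)

lemma Msub_sets: "I \<subseteq> fed_index K N J \<Longrightarrow> sets (Msub I) = sigma_sets (space M) (\<Union>i\<in>I. fed_events M S P kk xi i)"
  unfolding Msub_def by (rule sets_measure_of) (use fed_events_Pow in blast)

lemma Msub_gen: "I \<subseteq> fed_index K N J \<Longrightarrow> i \<in> I \<Longrightarrow> A \<in> fed_events M S P kk xi i \<Longrightarrow> A \<in> sets (Msub I)"
  by (auto simp: Msub_sets)

lemma P_Msub:
  assumes I: "I \<subseteq> fed_index K N J" and i: "Inl (t', k) \<in> I"
  shows "P t' k \<in> borel_measurable (Msub I)"
proof (rule measurableI)
  fix A :: "(real^'dn^'r) set" assume A: "A \<in> sets borel"
  have "P t' k -` A \<inter> space M \<in> fed_events M S P kk xi (Inl (t', k))"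
    using A by (auto simp: fed_events_def)
  then show "P t' k -` A \<inter> space (Msub I) \<in> sets (Msub I)"
    using Msub_gen[OF I i] Msub_space[OF I] by simp
qed simp

lemma kk_Msub:
  assumes I: "I \<subseteq> fed_index K N J" and i: "Inr (Inl (t', n)) \<in> I"
  shows "kk t' n \<in> measurable (Msub I) (count_space {..<K})"
proof (rule measurableI)
  have n: "n < N" using I i by (auto simp: fed_index_def)
  show "\<And>x. x \<in> space (Msub I) \<Longrightarrow> kk t' n x \<in> space (count_space {..<K})"
    using kk_range[OF n] Msub_space[OF I] by auto
  fix A :: "nat set" assume A: "A \<in> sets (count_space {..<K})"
  have "kk t' n -` A \<inter> space M \<in> fed_events M S P kk xi (Inr (Inl (t', n)))"
    by (auto simp: fed_events_def)
  then show "kk t' n -` A \<inter> space (Msub I) \<in> sets (Msub I)"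
    using Msub_gen[OF I i] Msub_space[OF I] by simp
qed

lemma xi_Msub:
  assumes I: "I \<subseteq> fed_index K N J" and i: "Inr (Inr (t', n, j)) \<in> I"
  shows "xi t' n j \<in> measurable (Msub I) S"
proof (rule measurableI)
  have nj: "n < N" "j < J" using I i by (auto simp: fed_index_def)
  show "\<And>x. x \<in> space (Msub I) \<Longrightarrow> xi t' n j x \<in> space S"
    using measurable_space[OF xi_meas[OF nj]] Msub_space[OF I] by auto
  fix A assume A: "A \<in> sets S"
  have "xi t' n j -` A \<inter> space M \<in> fed_events M S P kk xi (Inr (Inr (t', n, j)))"
    using A by (auto simp: fed_events_def)
  then show "xi t' n j -` A \<inter> space (Msub I) \<in> sets (Msub I)"
    using Msub_gen[OF I i] Msub_space[OF I] by simp
qed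

lemma kk_M: "n < N \<Longrightarrow> kk t' n \<in> measurable M (count_space {..<K})"
  using kk_meas[of n t'] kk_range[of n]
  by (auto simp: measurable_def)

lemma gradFn_cont: "n < N \<Longrightarrow> continuous_on UNIV (gradFn n)"
proof -
  assume n: "n < N"
  show ?thesis
  proof (rule continuous_onI)
    fix x :: "real^'dn^'dm" and e :: real assume e: "0 < e"
    show "\<exists>d>0. \<forall>x'\<in>UNIV. dist x' x < d \<longrightarrow> dist (gradFn n x') (gradFn n x) \<le> e"
    proof (intro exI[of _ "e / (\<bar>L\<bar> + 1)"] conjI ballI impI)
      show "0 < e / (\<bar>L\<bar> + 1)" using e by (simp add: add_pos_nonneg)
      fix x' :: "real^'dn^'dm" assume d: "dist x' x < e / (\<bar>L\<bar> + 1)"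
      have "dist (gradFn n x') (gradFn n x) \<le> L * dist x' x"
        using smooth[OF n, of x' x] by (simp add: dist_norm)
      also have "\<dots> \<le> (\<bar>L\<bar> + 1) * dist x' x" by (intro mult_right_mono) auto
      also have "\<dots> \<le> (\<bar>L\<bar> + 1) * (e / (\<bar>L\<bar> + 1))"
        using d by (intro mult_left_mono) auto
      also have "\<dots> = e" by (simp add: add_pos_nonneg)
      finally show "dist (gradFn n x') (gradFn n x) \<le> e" .
    qed
  qed
qed

lemma gradFn_meas[measurable]: "n < N \<Longrightarrow> gradFn n \<in> borel_measurable borel"
  by (rule borel_measurable_continuous_onI[OF gradFn_cont])

lemma g_comp_meas:
  assumes n: "n < N" and A: "A \<in> borel_measurable M'" and B: "B \<in> measurable M' S"
  shows "(\<lambda>w. g n (A w) (B w)) \<in> borel_measurable M'"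
proof -
  have "(\<lambda>w. (A w, B w)) \<in> measurable M' (borel \<Otimes>\<^sub>M S)" using A B by measurable
  from measurable_compose[OF this g_meas[OF n]] show ?thesis by simp
qed

lemma localB_meas:
  assumes n: "n < N" and Wf: "Wf \<in> borel_measurable M'" and Pf: "Pf \<in> borel_measurable M'"
    and xs: "\<And>i. i < j \<Longrightarrow> xs i \<in> measurable M' S"
  shows "(\<lambda>w. localB g eta n (Wf w) (Pf w) (\<lambda>i. xs i w) j) \<in> borel_measurable M'"
  using xs
proof (induction j)
  case 0 then show ?case by simp
next
  case (Suc j)
  have IH: "(\<lambda>w. localB g eta n (Wf w) (Pf w) (\<lambda>i. xs i w) j) \<in> borel_measurable M'"
    using Suc by auto
  have x: "xs j \<in> measurable M' S" using Suc by auto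
  have gm: "(\<lambda>w. g n (Wf w + localB g eta n (Wf w) (Pf w) (\<lambda>i. xs i w) j ** Pf w) (xs j w)) \<in> borel_measurable M'"
    by (rule g_comp_meas[OF n _ x]) (use IH Wf Pf in measurable)
  show ?case using IH gm Pf by simp measurable
qed

lemma PkK_meas:
  assumes hP: "\<And>k. k < K \<Longrightarrow> P t' k \<in> borel_measurable M'"
    and hk: "kk t' n \<in> measurable M' (count_space {..<K})"
  shows "(\<lambda>w. P t' (kk t' n w) w) \<in> borel_measurable M'"
  by (rule measurable_compose_countable'[OF _ hk]) (use hP in auto)

lemma fedW_meas:
  assumes hP: "\<And>t' k. t' < t0 \<Longrightarrow> k < K \<Longrightarrow> P t' k \<in> borel_measurable M'"
    and hk: "\<And>t' n. t' < t0 \<Longrightarrow> n < N \<Longrightarrow> kk t' n \<in> measurable M' (count_space {..<K})"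
    and hx: "\<And>t' n j. t' < t0 \<Longrightarrow> n < N \<Longrightarrow> j < J \<Longrightarrow> xi t' n j \<in> measurable M' S"
  shows "Wrv g eta N J W0 P kk xi t0 \<in> borel_measurable M'"
  using hP hk hx
proof (induction t0)
  case 0 then show ?case by (simp add: Wrv_def)
next
  case (Suc t0)
  let ?W = "Wrv g eta N J W0 P kk xi t0"
  have IH: "?W \<in> borel_measurable M'" using Suc.prems by (intro Suc.IH) auto
  have Pm: "\<And>n. n < N \<Longrightarrow> (\<lambda>w. P t0 (kk t0 n w) w) \<in> borel_measurable M'"
    using Suc.prems by (intro PkK_meas) auto
  have Bm: "\<And>n. n < N \<Longrightarrow> (\<lambda>w. localB g eta n (?W w) (P t0 (kk t0 n w) w) (\<lambda>j. xi t0 n j w) J) \<in> borel_measurable M'"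
    using Suc.prems by (intro localB_meas IH Pm) auto
  have eq: "Wrv g eta N J W0 P kk xi (Suc t0) = (\<lambda>w. ?W w + (1 / real N) *\<^sub>R
      (\<Sum>n<N. localB g eta n (?W w) (P t0 (kk t0 n w) w) (\<lambda>j. xi t0 n j w) J ** P t0 (kk t0 n w) w))"
    by (simp add: Wrv_def fun_eq_iff)
  have "(\<lambda>w. \<Sum>n<N. localB g eta n (?W w) (P t0 (kk t0 n w) w) (\<lambda>j. xi t0 n j w) J ** P t0 (kk t0 n w) w)
      \<in> borel_measurable M'"
    by (rule borel_measurable_sum) (use Bm Pm in measurable)
  then show ?case unfolding eq using IH by measurable
qed

end

context fedK begin

definition cc where "cc = real CARD('dn) / real CARD('r)"
definition Wt where "Wt = Wrv g eta N J W0 P kk xi t"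
definition Pn where "Pn n w = P t (kk t n w) w"
definition An where "An n w = transpose (Pn n w) ** Pn n w"
definition Uv where "Uv n j w = Brv g eta N J W0 P kk xi t n j w ** Pn n w"
definition Wl where "Wl n j w = Wt w + Uv n j w"
definition ee where "ee n j w = g n (Wl n j w) (xi t n j w) - gradFn n (Wl n j w)"
definition GG where "GG w = avgGrad N gradFn (Wt w)"

lemma cc_pos: "cc > 0" by (simp add: cc_def)

lemma Brv_Suc: "Brv g eta N J W0 P kk xi t n (Suc j) w =
   Brv g eta N J W0 P kk xi t n j w - eta *\<^sub>R (g n (Wl n j w) (xi t n j w) ** transpose (Pn n w))"
  by (simp add: Brv_def Wl_def Uv_def Pn_def Wt_def)

lemma Uv_0: "Uv n 0 w = 0"
  by (simp add: Uv_def Brv_def matmul_zero_left)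

lemma Uv_Suc: "Uv n (Suc j) w = Uv n j w - eta *\<^sub>R (g n (Wl n j w) (xi t n j w) ** An n w)"
  unfolding Uv_def Brv_Suc An_def
  by (simp add: matmul_diff_left matmul_scaleR_left matrix_mul_assoc)

lemma Uv_sum: "Uv n j w = - eta *\<^sub>R (\<Sum>i<j. g n (Wl n i w) (xi t n i w) ** An n w)"
  by (induction j) (simp_all add: Uv_0 Uv_Suc algebra_simps)

lemma W_next: "Wrv g eta N J W0 P kk xi (Suc t) w = Wt w + (1 / real N) *\<^sub>R (\<Sum>n<N. Uv n J w)"
  by (simp add: Wrv_def Wt_def Uv_def Brv_def Pn_def)

lemma W_next_Dl: "Wrv g eta N J W0 P kk xi (Suc t) w = Wt w +
   (- eta / real N) *\<^sub>R (\<Sum>n<N. \<Sum>j<J. (gradFn n (Wl n j w) + ee n j w) ** An n w)"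
proof -
  have "\<And>n j. g n (Wl n j w) (xi t n j w) = gradFn n (Wl n j w) + ee n j w" by (simp add: ee_def)
  then show ?thesis
    unfolding W_next Uv_sum by (simp add: scaleR_sum_right)
qed

lemma AE_orth: "AE w in M. \<forall>k\<in>{..<K}. P t k w ** transpose (P t k w) = cc *\<^sub>R mat 1"
  unfolding cc_def by (subst AE_finite_all) (auto intro: P_orth)

lemma An_props:
  assumes w: "w \<in> space M" and o: "\<forall>k\<in>{..<K}. P t k w ** transpose (P t k w) = cc *\<^sub>R mat 1" and n: "n < N"
  shows "An n w ** An n w = cc *\<^sub>R An n w" "transpose (An n w) = An n w"
proof -
  have "kk t n w < K" by (rule kk_range[OF n w])
  then have "Pn n w ** transpose (Pn n w) = cc *\<^sub>R mat 1" using o by (simp add: Pn_def)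
  then show "An n w ** An n w = cc *\<^sub>R An n w" unfolding An_def by (rule PtP_sq)
  show "transpose (An n w) = An n w" unfolding An_def by (simp add: matrix_transpose_mul)
qed

lemma Wt_meas':
  assumes "\<And>t' k. t' < t \<Longrightarrow> k < K \<Longrightarrow> P t' k \<in> borel_measurable M'"
    and "\<And>t' n. t' < t \<Longrightarrow> n < N \<Longrightarrow> kk t' n \<in> measurable M' (count_space {..<K})"
    and "\<And>t' n j. t' < t \<Longrightarrow> n < N \<Longrightarrow> j < J \<Longrightarrow> xi t' n j \<in> measurable M' S"
  shows "Wt \<in> borel_measurable M'"
  unfolding Wt_def by (rule fedW_meas) (use assms in auto)

lemma Pn_meas':
  assumes "\<And>k. k < K \<Longrightarrow> P t k \<in> borel_measurable M'" and "kk t n \<in> measurable M' (count_space {..<K})"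
  shows "Pn n \<in> borel_measurable M'"
  unfolding Pn_def[abs_def] by (rule PkK_meas) (use assms in auto)

lemma An_meas':
  assumes "Pn n \<in> borel_measurable M'"
  shows "An n \<in> borel_measurable M'"
  unfolding An_def[abs_def] using assms by measurable

lemma Uv_meas':
  assumes n: "n < N" and W: "Wt \<in> borel_measurable M'" and Pm: "Pn n \<in> borel_measurable M'"
    and x: "\<And>i. i < j \<Longrightarrow> xi t n i \<in> measurable M' S"
  shows "Uv n j \<in> borel_measurable M'"
proof -
  have "(\<lambda>w. localB g eta n (Wt w) (Pn n w) (\<lambda>i. xi t n i w) j) \<in> borel_measurable M'"
    by (rule localB_meas[OF n W Pm x])
  then show ?thesis
    unfolding Uv_def[abs_def] Brv_def using Pm by (simp add: Wt_def[symmetric] Pn_def[symmetric]) measurable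
qed

lemma Wl_meas':
  assumes "Wt \<in> borel_measurable M'" "Uv n j \<in> borel_measurable M'"
  shows "Wl n j \<in> borel_measurable M'"
  unfolding Wl_def[abs_def] using assms by measurable

lemma ee_meas':
  assumes n: "n < N" and Wl: "Wl n j \<in> borel_measurable M'" and x: "xi t n j \<in> measurable M' S"
  shows "ee n j \<in> borel_measurable M'"
proof -
  have "(\<lambda>w. g n (Wl n j w) (xi t n j w)) \<in> borel_measurable M'" by (rule g_comp_meas[OF n Wl x])
  moreover have "(\<lambda>w. gradFn n (Wl n j w)) \<in> borel_measurable M'"
    using Wl gradFn_meas[OF n] by measurable
  ultimately show ?thesis unfolding ee_def[abs_def] by measurable
qed

lemma Wt_M[measurable]: "Wt \<in> borel_measurable M"
  by (rule Wt_meas') (auto intro: P_meas kk_M xi_meas)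
lemma Pn_M[measurable]: "n < N \<Longrightarrow> Pn n \<in> borel_measurable M"
  by (rule Pn_meas') (auto intro: P_meas kk_M)
lemma An_M[measurable]: "n < N \<Longrightarrow> An n \<in> borel_measurable M"
  by (rule An_meas'[OF Pn_M])
lemma Uv_M[measurable]: "n < N \<Longrightarrow> j \<le> J \<Longrightarrow> Uv n j \<in> borel_measurable M"
  by (rule Uv_meas') (auto intro!: Pn_M xi_meas)
lemma Wl_M[measurable]: "n < N \<Longrightarrow> j \<le> J \<Longrightarrow> Wl n j \<in> borel_measurable M"
  by (rule Wl_meas'[OF Wt_M Uv_M])
lemma ee_M[measurable]: "n < N \<Longrightarrow> j < J \<Longrightarrow> ee n j \<in> borel_measurable M"
  by (rule ee_meas'[OF _ Wl_M xi_meas]) auto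
lemma GG_M[measurable]: "GG \<in> borel_measurable M"
  unfolding GG_def[abs_def] avgGrad_def by measurable

end

context fedK begin

lemma L_pos: "L > 0"
proof (rule ccontr)
  assume "\<not> L > 0"
  then have "16 * L * real CARD('dn) * real J \<le> 0"
    by (simp add: mult_nonpos_nonneg)
  then have "real CARD('r) / (16 * L * real CARD('dn) * real J) \<le> 0"
    by (rule divide_nonneg_nonpos[OF of_nat_0_le_iff])
  then show False using eta_le eta_pos by linarith
qed

lemma step_small: "eta * L * real J * cc \<le> 1 / 16"
proof -
  have pos: "16 * L * real CARD('dn) * real J > 0" using L_pos J by simp
  have "eta * (16 * L * real CARD('dn) * real J) \<le> real CARD('r)"
    using eta_le pos by (simp add: pos_le_divide_eq)
  then show ?thesis unfolding cc_def by (simp add: field_simps)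
qed

lemma PtP_integrable:
  assumes k: "k < K" shows "integrable M (\<lambda>w. transpose (P t' k w) ** P t' k w)"
proof (rule ccontr)
  assume ni: "\<not> integrable M (\<lambda>w. transpose (P t' k w) ** P t' k w)"
  from ni have "(\<integral>w. transpose (P t' k w) ** P t' k w \<partial>M) = 0" by (rule not_integrable_integral_eq)
  then have "(mat 1 :: real^'dn^'dn) = 0" using P_mean[OF k] by simp
  then have "(mat 1 :: real^'dn^'dn) $ undefined $ undefined = 0" by simp
  then show False by (simp add: mat_def)
qed

lemma diag_bound:
  fixes A :: "real^'n^'n" and c :: real
  assumes AA: "A ** A = c *\<^sub>R A" and At: "transpose A = A" and c: "c > 0" and nn: "A $ i $ i \<ge> 0"
  shows "A $ i $ i \<le> c"
proof -
  have "(A ** A) $ i $ i = (\<Sum>l\<in>UNIV. A $ i $ l * A $ l $ i)" by (simp add: matrix_matrix_mult_def)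
  also have "\<dots> = (\<Sum>l\<in>UNIV. (A $ i $ l)\<^sup>2)"
  proof (rule sum.cong[OF refl])
    fix l have "A $ l $ i = A $ i $ l" using arg_cong[OF At, of "\<lambda>X. X $ i $ l"] by (simp add: transpose_def)
    then show "A $ i $ l * A $ l $ i = (A $ i $ l)\<^sup>2" by (simp add: power2_eq_square)
  qed
  finally have "(A ** A) $ i $ i \<ge> (A $ i $ i)\<^sup>2"
    by (metis (no_types, lifting) UNIV_I finite member_le_sum zero_le_power2)
  then have "(A $ i $ i)\<^sup>2 \<le> c * A $ i $ i" using AA by simp
  then have "A $ i $ i * A $ i $ i \<le> c * A $ i $ i" by (simp add: power2_eq_square)
  then show ?thesis using nn c
    by (cases "A $ i $ i = 0") (auto simp: mult_le_cancel_right)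
qed

lemma cc_ge1: "cc \<ge> 1"
proof -
  have k: "0 < K" using K by simp
  define A where "A w = transpose (P t 0 w) ** P t 0 w" for w
  define i :: 'dn where "i = undefined"
  have intA: "integrable M A" unfolding A_def[abs_def] by (rule PtP_integrable[OF k])
  have bl: "bounded_linear (\<lambda>X::real^'dn^'dn. X $ i $ i)"
    by (rule bounded_linear_compose[OF bounded_linear_vec_nth bounded_linear_vec_nth])
  have int_ii: "integrable M (\<lambda>w. A w $ i $ i)" by (rule integrable_bounded_linear[OF bl intA])
  have "(\<integral>w. A w $ i $ i \<partial>M) = (\<integral>w. A w \<partial>M) $ i $ i"
    by (rule integral_bounded_linear[OF bl intA])
  also have "\<dots> = 1" using P_mean[where t=t and k=0, OF k] by (simp add: A_def mat_def)
  finally have one: "(\<integral>w. A w $ i $ i \<partial>M) = 1" .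
  have "AE w in M. A w $ i $ i \<le> cc"
    using P_orth[where t=t and k=0, OF k]
  proof eventually_elim
    case (elim w)
    then have o: "P t 0 w ** transpose (P t 0 w) = cc *\<^sub>R mat 1" by (simp add: cc_def)
    have nn: "A w $ i $ i \<ge> 0"
      by (simp add: A_def matrix_matrix_mult_def transpose_def sum_nonneg)
    show ?case
      by (rule diag_bound[OF _ _ cc_pos nn]) (simp_all add: A_def PtP_sq[OF o] matrix_transpose_mul)
  qed
  then have "(\<integral>w. A w $ i $ i \<partial>M) \<le> (\<integral>w. cc \<partial>M)"
    by (intro integral_mono_AE int_ii) auto
  then show ?thesis using one by (simp add: prob_space)
qed

end

lemma int_inner:
  fixes X Y :: "'x \<Rightarrow> 'v::{real_inner, banach, second_countable_topology}"
  assumes X: "X \<in> borel_measurable M" and Y: "Y \<in> borel_measurable M"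
    and iX: "integrable M (\<lambda>w. (norm (X w))\<^sup>2)" and iY: "integrable M (\<lambda>w. (norm (Y w))\<^sup>2)"
  shows "integrable M (\<lambda>w. inner (X w) (Y w))"
proof (rule Bochner_Integration.integrable_bound)
  show "integrable M (\<lambda>w. (norm (X w))\<^sup>2 + (norm (Y w))\<^sup>2)" using iX iY by simp
  show "(\<lambda>w. inner (X w) (Y w)) \<in> borel_measurable M" using X Y by measurable
  show "AE w in M. norm (inner (X w) (Y w)) \<le> norm ((norm (X w))\<^sup>2 + (norm (Y w))\<^sup>2)"
  proof (rule AE_I2)
    fix w
    have "\<bar>inner (X w) (Y w)\<bar> \<le> norm (X w) * norm (Y w)" by (rule Cauchy_Schwarz_ineq2)
    also have "\<dots> \<le> (norm (X w))\<^sup>2 + (norm (Y w))\<^sup>2"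
    proof -
      have "0 \<le> (norm (X w) - norm (Y w))\<^sup>2" by simp
      moreover have "0 \<le> norm (X w) * norm (Y w)" by simp
      ultimately show ?thesis unfolding power2_diff by linarith
    qed
    finally show "norm (inner (X w) (Y w)) \<le> norm ((norm (X w))\<^sup>2 + (norm (Y w))\<^sup>2)" by simp
  qed
qed

lemma int_sq_bound:
  fixes X Y :: "'x \<Rightarrow> 'v::{real_normed_vector}"
  assumes Y: "Y \<in> borel_measurable M" and iX: "integrable M (\<lambda>w. (norm (X w))\<^sup>2)"
    and b: "AE w in M. norm (Y w) \<le> c * norm (X w)"
  shows "integrable M (\<lambda>w. (norm (Y w))\<^sup>2)"
proof (rule Bochner_Integration.integrable_bound)
  show "integrable M (\<lambda>w. c\<^sup>2 * (norm (X w))\<^sup>2)" using iX by simp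
  show "(\<lambda>w. (norm (Y w))\<^sup>2) \<in> borel_measurable M" using Y by measurable
  show "AE w in M. norm ((norm (Y w))\<^sup>2) \<le> norm (c\<^sup>2 * (norm (X w))\<^sup>2)"
    using b
  proof eventually_elim
    case (elim w)
    have "(norm (Y w))\<^sup>2 \<le> (c * norm (X w))\<^sup>2" by (rule power_mono[OF elim norm_ge_zero])
    then show ?case by (simp add: power_mult_distrib)
  qed
qed

lemma bl_inner_mat:
  fixes x :: "real^'n^'m" and y :: "real^'k^'m"
  shows "bounded_linear (\<lambda>Q::real^'n^'k. b * inner x (y ** Q))"
proof -
  have "linear (\<lambda>Q::real^'n^'k. b * inner x (y ** Q))"
    by (rule linearI) (simp_all add: matrix_add_ldistrib matmul_scaleR_right inner_add_right algebra_simps)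
  then show ?thesis by (simp add: linear_conv_bounded_linear)
qed

lemma Int_stable_vimage: "Int_stable {f -` A \<inter> X | A. A \<in> sets Q}"
  unfolding Int_stable_def
proof safe
  fix A B assume "A \<in> sets Q" "B \<in> sets Q"
  then show "\<exists>C. (f -` A \<inter> X) \<inter> (f -` B \<inter> X) = f -` C \<inter> X \<and> C \<in> sets Q"
    by (intro exI[of _ "A \<inter> B"]) auto
qed

lemma Int_stable_vimage_all: "Int_stable {u. \<exists>A. u = f -` A \<inter> X}"
  unfolding Int_stable_def
proof safe
  fix A B
  show "\<exists>C. (f -` A \<inter> X) \<inter> (f -` B \<inter> X) = f -` C \<inter> X"
    by (intro exI[of _ "A \<inter> B"]) auto
qed

context fedK begin

lemma fed_Int_stable: "Int_stable (fed_events M S P kk xi i)"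
  unfolding fed_events_def by (auto split: sum.splits prod.splits intro: Int_stable_vimage Int_stable_vimage_all)

lemma fed_indep:
  assumes a: "a \<in> fed_index K N J"
    and Z: "Z \<in> measurable (Msub (fed_index K N J - {a})) T"
    and V: "V \<in> measurable M Sa"
    and Vev: "\<And>A. A \<in> sets Sa \<Longrightarrow> V -` A \<inter> space M \<in> fed_events M S P kk xi a"
  shows "Z \<in> measurable M T"
    and "distr M T Z \<Otimes>\<^sub>M distr M Sa V = distr M (T \<Otimes>\<^sub>M Sa) (\<lambda>w. (Z w, V w))"
proof -
  have Z': "Z \<in> measurable (measure_of (space M) (\<Union>i\<in>fed_index K N J - {a}. fed_events M S P kk xi i) (\<lambda>_. 0)) T"
    using Z by (simp add: Msub_def)
  show "Z \<in> measurable M T"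
    "distr M T Z \<Otimes>\<^sub>M distr M Sa V = distr M (T \<Otimes>\<^sub>M Sa) (\<lambda>w. (Z w, V w))"
    using indep_pair_from_sets[OF indep a fed_Int_stable Z' V Vev] by auto
qed

lemma Msub_hyps:
  assumes I: "I = fed_index K N J - {a}"
  shows "\<And>t' k. k < K \<Longrightarrow> Inl (t', k) \<noteq> a \<Longrightarrow> P t' k \<in> borel_measurable (Msub I)"
    and "\<And>t' n. n < N \<Longrightarrow> Inr (Inl (t', n)) \<noteq> a \<Longrightarrow> kk t' n \<in> measurable (Msub I) (count_space {..<K})"
    and "\<And>t' n j. n < N \<Longrightarrow> j < J \<Longrightarrow> Inr (Inr (t', n, j)) \<noteq> a \<Longrightarrow> xi t' n j \<in> measurable (Msub I) S"
proof -
  have sub: "I \<subseteq> fed_index K N J" using I by auto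
  show "\<And>t' k. k < K \<Longrightarrow> Inl (t', k) \<noteq> a \<Longrightarrow> P t' k \<in> borel_measurable (Msub I)"
    by (rule P_Msub[OF sub]) (auto simp: I fed_index_def)
  show "\<And>t' n. n < N \<Longrightarrow> Inr (Inl (t', n)) \<noteq> a \<Longrightarrow> kk t' n \<in> measurable (Msub I) (count_space {..<K})"
    by (rule kk_Msub[OF sub]) (auto simp: I fed_index_def)
  show "\<And>t' n j. n < N \<Longrightarrow> j < J \<Longrightarrow> Inr (Inr (t', n, j)) \<noteq> a \<Longrightarrow> xi t' n j \<in> measurable (Msub I) S"
    by (rule xi_Msub[OF sub]) (auto simp: I fed_index_def)
qed

lemma Wt_Msub:
  assumes "\<forall>t'<t. \<forall>k<K. Inl (t', k) \<noteq> a" "\<forall>t'<t. \<forall>n<N. Inr (Inl (t', n)) \<noteq> a"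
    "\<forall>t'<t. \<forall>n<N. \<forall>j<J. Inr (Inr (t', n, j)) \<noteq> a"
  shows "Wt \<in> borel_measurable (Msub (fed_index K N J - {a}))"
  by (rule Wt_meas') (use assms Msub_hyps[where a=a, OF refl] in auto)

end

context fedK begin

lemma normA_le_AE:
  assumes w: "w \<in> space M" and o: "\<forall>k\<in>{..<K}. P t k w ** transpose (P t k w) = cc *\<^sub>R mat 1"
    and k: "k < K"
  shows "norm (Y ** (transpose (P t k w) ** P t k w)) \<le> cc * norm Y"
proof -
  have o': "P t k w ** transpose (P t k w) = cc *\<^sub>R mat 1" using o k by auto
  show ?thesis
    by (rule normA_le[OF PtP_sq[OF o']]) (simp_all add: matrix_transpose_mul less_imp_le[OF cc_pos])
qed

lemma P_lemma:
  fixes \<phi> \<psi> :: "real^'dn^'dm \<Rightarrow> real^'dn^'dm"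
  assumes n: "n < N" and \<phi>[measurable]: "\<phi> \<in> borel_measurable borel"
    and \<psi>[measurable]: "\<psi> \<in> borel_measurable borel"
    and iX: "integrable M (\<lambda>w. (norm (\<phi> (Wt w)))\<^sup>2)" and iY: "integrable M (\<lambda>w. (norm (\<psi> (Wt w)))\<^sup>2)"
  shows "integrable M (\<lambda>w. inner (\<phi> (Wt w)) (\<psi> (Wt w) ** An n w))"
    and "(\<integral>w. inner (\<phi> (Wt w)) (\<psi> (Wt w) ** An n w) \<partial>M) = (\<integral>w. inner (\<phi> (Wt w)) (\<psi> (Wt w)) \<partial>M)"
proof -
  define X where "X w = \<phi> (Wt w)" for w
  define Y where "Y w = \<psi> (Wt w)" for w
  have Xm[measurable]: "X \<in> borel_measurable M" unfolding X_def[abs_def] by measurable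
  have Ym[measurable]: "Y \<in> borel_measurable M" unfolding Y_def[abs_def] by measurable
  have iX': "integrable M (\<lambda>w. (norm (X w))\<^sup>2)" using iX by (simp add: X_def)
  have iY': "integrable M (\<lambda>w. (norm (Y w))\<^sup>2)" using iY by (simp add: Y_def)
  have iXY: "integrable M (\<lambda>w. inner (X w) (Y w))" by (rule int_inner[OF Xm Ym iX' iY'])
  define f where "f k w = (if kk t n w = k then 1 else 0) * inner (X w) (Y w ** (transpose (P t k w) ** P t k w))" for k w
  define h where "h k w = (if kk t n w = k then 1 else 0) * inner (X w) (Y w)" for k w
  have sum_f: "inner (X w) (Y w ** An n w) = (\<Sum>k<K. f k w)" if w: "w \<in> space M" for w
  proof -
    have kw: "kk t n w < K" by (rule kk_range[OF n w])
    have "(\<Sum>k<K. f k w) = (\<Sum>k<K. if kk t n w = k then inner (X w) (Y w ** (transpose (P t k w) ** P t k w)) else 0)"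
      by (rule sum.cong) (auto simp: f_def)
    also have "\<dots> = inner (X w) (Y w ** An n w)"
      using kw by (simp add: sum.delta An_def Pn_def)
    finally show ?thesis by simp
  qed
  have sum_h: "inner (X w) (Y w) = (\<Sum>k<K. h k w)" if w: "w \<in> space M" for w
  proof -
    have kw: "kk t n w < K" by (rule kk_range[OF n w])
    have "(\<Sum>k<K. h k w) = (\<Sum>k<K. if kk t n w = k then inner (X w) (Y w) else 0)"
      by (rule sum.cong) (auto simp: h_def)
    also have "\<dots> = inner (X w) (Y w)" using kw by (simp add: sum.delta)
    finally show ?thesis by simp
  qed
  have kkM: "kk t n \<in> measurable M (count_space {..<K})" by (rule kk_M[OF n])
  have indM: "(\<lambda>w. if kk t n w = k then 1 else (0::real)) \<in> borel_measurable M'"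
    if kkM': "kk t n \<in> measurable M' (count_space {..<K})" for M' k
  proof -
    have "(\<lambda>m. if m = k then 1 else (0::real)) \<in> measurable (count_space {..<K}) borel"
      by (simp add: measurable_count_space_eq1)
    from measurable_compose[OF kkM' this] show ?thesis .
  qed
  have inth: "integrable M (h k)" for k
  proof (rule Bochner_Integration.integrable_bound[OF iXY])
    show "h k \<in> borel_measurable M" unfolding h_def[abs_def] using indM[OF kkM] by measurable
    show "AE w in M. norm (h k w) \<le> norm (inner (X w) (Y w))" by (rule AE_I2) (simp add: h_def)
  qed
  have fk: "integrable M (f k) \<and> integral\<^sup>L M (f k) = integral\<^sup>L M (h k)" if k: "k < K" for k
  proof -
    let ?a = "Inl (t, k) :: (nat \<times> nat) + (nat \<times> nat) + (nat \<times> nat \<times> nat)"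
    let ?MS = "Msub (fed_index K N J - {?a})"
    have a: "?a \<in> fed_index K N J" using k by (simp add: fed_index_def)
    define Z where "Z w = (Wt w, if kk t n w = k then 1 else (0::real))" for w
    have WtS: "Wt \<in> borel_measurable ?MS" by (rule Wt_Msub) auto
    have kkS: "kk t n \<in> measurable ?MS (count_space {..<K})"
      by (rule Msub_hyps(2)[OF refl n]) simp
    have indS: "(\<lambda>w. if kk t n w = k then 1 else (0::real)) \<in> borel_measurable ?MS"
      by (rule indM[OF kkS])
    have ZS: "Z \<in> measurable ?MS (borel \<Otimes>\<^sub>M borel)" unfolding Z_def[abs_def] using WtS indS by measurable
    have V: "P t k \<in> measurable M borel" by (rule P_meas[OF k])
    have Vev: "P t k -` A \<inter> space M \<in> fed_events M S P kk xi ?a" if "A \<in> sets borel" for A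
      using that by (auto simp: fed_events_def)
    note ZM = fed_indep(1)[OF a ZS V Vev] and Zeq = fed_indep(2)[OF a ZS V Vev]
    define F where "F p = snd (fst p) * inner (\<phi> (fst (fst p))) (\<psi> (fst (fst p)) ** (transpose (snd p) ** snd p))"
      for p :: "((real^'dn^'dm) \<times> real) \<times> (real^'dn^'r)"
    have Fm: "F \<in> borel_measurable ((borel \<Otimes>\<^sub>M borel) \<Otimes>\<^sub>M borel)" unfolding F_def[abs_def] by measurable
    have FZ: "F (Z w, P t k w) = f k w" for w by (simp add: F_def Z_def f_def X_def Y_def)
    have intf: "integrable M (f k)"
    proof (rule Bochner_Integration.integrable_bound)
      show "integrable M (\<lambda>w. cc * ((norm (X w))\<^sup>2 + (norm (Y w))\<^sup>2))" using iX' iY' by simp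
      show "f k \<in> borel_measurable M" unfolding f_def[abs_def] using indM[OF kkM] V by measurable
      show "AE w in M. norm (f k w) \<le> norm (cc * ((norm (X w))\<^sup>2 + (norm (Y w))\<^sup>2))"
        using AE_orth AE_space
      proof eventually_elim
        case (elim w)
        have "\<bar>f k w\<bar> \<le> \<bar>inner (X w) (Y w ** (transpose (P t k w) ** P t k w))\<bar>"
          by (simp add: f_def)
        also have "\<dots> \<le> norm (X w) * norm (Y w ** (transpose (P t k w) ** P t k w))"
          by (rule Cauchy_Schwarz_ineq2)
        also have "\<dots> \<le> norm (X w) * (cc * norm (Y w))"
          by (rule mult_left_mono[OF normA_le_AE[OF elim(2) elim(1) k]]) simp
        also have "\<dots> \<le> cc * ((norm (X w))\<^sup>2 + (norm (Y w))\<^sup>2)"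
        proof -
          have "0 \<le> (norm (X w) - norm (Y w))\<^sup>2" by simp
          moreover have "0 \<le> norm (X w) * norm (Y w)" by simp
          ultimately have "norm (X w) * norm (Y w) \<le> (norm (X w))\<^sup>2 + (norm (Y w))\<^sup>2"
            unfolding power2_diff by linarith
          then show ?thesis using cc_pos by (simp add: mult.left_commute mult_left_mono)
        qed
        finally show ?case using cc_pos by simp
      qed
    qed
    have intFZ: "integrable M (\<lambda>w. F (Z w, P t k w))" using intf by (simp add: FZ)
    have intPP: "integrable (distr M borel (P t k)) (\<lambda>p. transpose p ** p)"
      by (subst integrable_distr_eq) (use V PtP_integrable[OF k, of t] in auto)
    have PP1: "(\<integral>p. transpose p ** p \<partial>distr M borel (P t k)) = mat 1"
      by (subst integral_distr) (use V P_mean[where t=t and k=k, OF k] in auto)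
    have "integral\<^sup>L M (f k) = (\<integral>w. F (Z w, P t k w) \<partial>M)" by (simp add: FZ)
    also have "\<dots> = (\<integral>w. (\<integral>p. F (Z w, p) \<partial>distr M borel (P t k)) \<partial>M)"
      by (rule indep_fubini(1)[OF ZM V Zeq Fm intFZ])
    also have "\<dots> = integral\<^sup>L M (h k)"
    proof (rule Bochner_Integration.integral_cong[OF refl])
      fix w assume w: "w \<in> space M"
      have "(\<integral>p. F (Z w, p) \<partial>distr M borel (P t k))
          = (\<integral>p. snd (Z w) * inner (X w) (Y w ** (transpose p ** p)) \<partial>distr M borel (P t k))"
        by (simp add: F_def Z_def X_def Y_def)
      also have "\<dots> = snd (Z w) * inner (X w) (Y w ** (\<integral>p. transpose p ** p \<partial>distr M borel (P t k)))"
        by (rule integral_bounded_linear[OF bl_inner_mat intPP])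
      also have "\<dots> = h k w" by (simp add: PP1 Z_def h_def)
      finally show "(\<integral>p. F (Z w, p) \<partial>distr M borel (P t k)) = h k w" .
    qed
    finally show ?thesis using intf by simp
  qed
  have int1: "integrable M (\<lambda>w. inner (X w) (Y w ** An n w))"
  proof -
    have "integrable M (\<lambda>w. \<Sum>k<K. f k w)"
      by (rule Bochner_Integration.integrable_sum) (use fk in auto)
    moreover have "integrable M (\<lambda>w. inner (X w) (Y w ** An n w)) \<longleftrightarrow> integrable M (\<lambda>w. \<Sum>k<K. f k w)"
      by (rule Bochner_Integration.integrable_cong[OF refl]) (simp add: sum_f)
    ultimately show ?thesis by simp
  qed
  then show "integrable M (\<lambda>w. inner (\<phi> (Wt w)) (\<psi> (Wt w) ** An n w))" by (simp add: X_def Y_def)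
  have "(\<integral>w. inner (X w) (Y w ** An n w) \<partial>M) = (\<integral>w. (\<Sum>k<K. f k w) \<partial>M)"
    by (rule Bochner_Integration.integral_cong[OF refl]) (simp add: sum_f)
  also have "\<dots> = (\<Sum>k<K. integral\<^sup>L M (f k))"
    by (rule Bochner_Integration.integral_sum) (use fk in auto)
  also have "\<dots> = (\<Sum>k<K. integral\<^sup>L M (h k))" using fk by simp
  also have "\<dots> = (\<integral>w. (\<Sum>k<K. h k w) \<partial>M)"
    by (rule Bochner_Integration.integral_sum[symmetric]) (use inth in auto)
  also have "\<dots> = (\<integral>w. inner (X w) (Y w) \<partial>M)"
    by (rule Bochner_Integration.integral_cong[OF refl]) (simp add: sum_h)
  finally show "(\<integral>w. inner (\<phi> (Wt w)) (\<psi> (Wt w) ** An n w) \<partial>M) = (\<integral>w. inner (\<phi> (Wt w)) (\<psi> (Wt w)) \<partial>M)"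
    by (simp add: X_def Y_def)
qed

end

context fedK begin

lemma xi_round_Msub:
  assumes n0: "n0 < N" and j0: "j0 < J"
  defines "MSx \<equiv> Msub (fed_index K N J - {Inr (Inr (t, n0, j0))})"
  shows "Wt \<in> borel_measurable MSx"
    and "\<And>n. n < N \<Longrightarrow> Pn n \<in> borel_measurable MSx"
    and "\<And>n. n < N \<Longrightarrow> An n \<in> borel_measurable MSx"
    and "\<And>n j. n < N \<Longrightarrow> j \<le> J \<Longrightarrow> (n = n0 \<longrightarrow> j \<le> j0) \<Longrightarrow> Uv n j \<in> borel_measurable MSx"
    and "\<And>n j. n < N \<Longrightarrow> j \<le> J \<Longrightarrow> (n = n0 \<longrightarrow> j \<le> j0) \<Longrightarrow> Wl n j \<in> borel_measurable MSx"
    and "\<And>n j. n < N \<Longrightarrow> j < J \<Longrightarrow> (n = n0 \<longrightarrow> j < j0) \<Longrightarrow> ee n j \<in> borel_measurable MSx"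
    and "GG \<in> borel_measurable MSx"
proof -
  note H = Msub_hyps[where a="Inr (Inr (t, n0, j0))", OF refl]
  show W: "Wt \<in> borel_measurable MSx" unfolding MSx_def by (rule Wt_Msub) auto
  show Pm: "\<And>n. n < N \<Longrightarrow> Pn n \<in> borel_measurable MSx"
    unfolding MSx_def by (rule Pn_meas') (auto intro: H)
  show "\<And>n. n < N \<Longrightarrow> An n \<in> borel_measurable MSx" by (rule An_meas'[OF Pm])
  show U: "\<And>n j. n < N \<Longrightarrow> j \<le> J \<Longrightarrow> (n = n0 \<longrightarrow> j \<le> j0) \<Longrightarrow> Uv n j \<in> borel_measurable MSx"
  proof -
    fix n j assume n: "n < N" and j: "j \<le> J" and c: "n = n0 \<longrightarrow> j \<le> j0"
    show "Uv n j \<in> borel_measurable MSx"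
    proof (rule Uv_meas'[OF n W Pm[OF n]])
      fix i assume i: "i < j"
      show "xi t n i \<in> measurable MSx S" unfolding MSx_def
        by (rule H(3)) (use n i j c in auto)
    qed
  qed
  show Wl: "\<And>n j. n < N \<Longrightarrow> j \<le> J \<Longrightarrow> (n = n0 \<longrightarrow> j \<le> j0) \<Longrightarrow> Wl n j \<in> borel_measurable MSx"
    by (rule Wl_meas'[OF W U])
  show "\<And>n j. n < N \<Longrightarrow> j < J \<Longrightarrow> (n = n0 \<longrightarrow> j < j0) \<Longrightarrow> ee n j \<in> borel_measurable MSx"
  proof -
    fix n j assume n: "n < N" and j: "j < J" and c: "n = n0 \<longrightarrow> j < j0"
    show "ee n j \<in> borel_measurable MSx"
    proof (rule ee_meas'[OF n Wl])
      show "xi t n j \<in> measurable MSx S" unfolding MSx_def by (rule H(3)) (use n j c in auto)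
    qed (use n j c in auto)
  qed
  show "GG \<in> borel_measurable MSx" unfolding GG_def[abs_def] avgGrad_def using W by measurable
qed

lemma xi_setup:
  assumes n: "n < N" and j: "j < J"
    and Z: "Z \<in> measurable (Msub (fed_index K N J - {Inr (Inr (t, n, j))})) T"
  shows "Z \<in> measurable M T"
    and "distr M T Z \<Otimes>\<^sub>M distr M S (xi t n j) = distr M (T \<Otimes>\<^sub>M S) (\<lambda>w. (Z w, xi t n j w))"
proof -
  have a: "Inr (Inr (t, n, j)) \<in> fed_index K N J" using n j by (simp add: fed_index_def)
  have Vev: "xi t n j -` A \<inter> space M \<in> fed_events M S P kk xi (Inr (Inr (t, n, j)))" if "A \<in> sets S" for A
    using that by (auto simp: fed_events_def)
  show "Z \<in> measurable M T"
    "distr M T Z \<Otimes>\<^sub>M distr M S (xi t n j) = distr M (T \<Otimes>\<^sub>M S) (\<lambda>w. (Z w, xi t n j w))"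
    using fed_indep[OF a Z xi_meas[OF n j] Vev] by auto
qed

lemma g_fix_meas: "n < N \<Longrightarrow> (\<lambda>x. g n W x) \<in> borel_measurable S"
proof -
  assume n: "n < N"
  have "(\<lambda>x. (W, x)) \<in> measurable S (borel \<Otimes>\<^sub>M S)" by measurable
  from measurable_compose[OF this g_meas[OF n]] show ?thesis by simp
qed

lemma noise_var:
  assumes n: "n < N" and j: "j < J"
  shows "integrable M (\<lambda>w. (norm (ee n j w))\<^sup>2)" and "(\<integral>w. (norm (ee n j w))\<^sup>2 \<partial>M) \<le> sigma\<^sup>2"
proof -
  let ?MSx = "Msub (fed_index K N J - {Inr (Inr (t, n, j))})"
  have ZS: "Wl n j \<in> measurable ?MSx borel" by (rule xi_round_Msub(5)[OF n j n]) (use j in auto)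
  note ZM = xi_setup(1)[OF n j ZS] and Zeq = xi_setup(2)[OF n j ZS]
  define F where "F p = ennreal ((norm (g n (fst p) (snd p) - gradFn n (fst p)))\<^sup>2)" for p
  have gm: "(\<lambda>p. g n (fst p) (snd p)) \<in> borel_measurable (borel \<Otimes>\<^sub>M S)" by (rule g_meas[OF n])
  have Fm: "F \<in> borel_measurable (borel \<Otimes>\<^sub>M S)" unfolding F_def[abs_def] using gm gradFn_meas[OF n] by measurable
  have eeF: "ennreal ((norm (ee n j w))\<^sup>2) = F (Wl n j w, xi t n j w)" for w by (simp add: F_def ee_def)
  have inner_bound: "(\<integral>\<^sup>+x. F (W, x) \<partial>distr M S (xi t n j)) \<le> ennreal (sigma\<^sup>2)" for W
  proof -
    have gW: "(\<lambda>x. g n W x) \<in> borel_measurable S" by (rule g_fix_meas[OF n])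
    have "(\<integral>\<^sup>+x. F (W, x) \<partial>distr M S (xi t n j)) = (\<integral>\<^sup>+w. F (W, xi t n j w) \<partial>M)"
    proof (rule nn_integral_distr[OF xi_meas[OF n j]])
      have e: "(\<lambda>x. F (W, x)) = (\<lambda>x. ennreal ((norm (g n W x - gradFn n W))\<^sup>2))"
        by (simp add: F_def fun_eq_iff)
      have "(\<lambda>x. ennreal ((norm (g n W x - gradFn n W))\<^sup>2)) \<in> borel_measurable S" using gW by measurable
      then show "(\<lambda>x. F (W, x)) \<in> borel_measurable (distr M S (xi t n j))"
        unfolding e by (simp cong: measurable_cong_sets)
    qed
    also have "\<dots> = (\<integral>\<^sup>+w. ennreal ((norm (g n W (xi t n j w) - gradFn n W))\<^sup>2) \<partial>M)"
      by (simp add: F_def)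
    also have "\<dots> = ennreal (\<integral>w. (norm (g n W (xi t n j w) - gradFn n W))\<^sup>2 \<partial>M)"
      by (rule nn_integral_eq_integral) (use variance[where t=t and W=W, OF n j] in auto)
    also have "\<dots> \<le> ennreal (sigma\<^sup>2)"
      using variance[where t=t and W=W, OF n j] by (simp add: ennreal_leI)
    finally show ?thesis .
  qed
  have "(\<integral>\<^sup>+w. ennreal ((norm (ee n j w))\<^sup>2) \<partial>M) = (\<integral>\<^sup>+w. F (Wl n j w, xi t n j w) \<partial>M)"
    by (simp add: eeF)
  also have "\<dots> = (\<integral>\<^sup>+w. (\<integral>\<^sup>+x. F (Wl n j w, x) \<partial>distr M S (xi t n j)) \<partial>M)"
    by (rule indep_nn_fubini[OF ZM xi_meas[OF n j] Zeq Fm])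
  also have "\<dots> \<le> (\<integral>\<^sup>+w. ennreal (sigma\<^sup>2) \<partial>M)"
    by (rule nn_integral_mono) (rule inner_bound)
  also have "\<dots> = ennreal (sigma\<^sup>2)" by (simp add: emeasure_space_1)
  finally have nn: "(\<integral>\<^sup>+w. ennreal ((norm (ee n j w))\<^sup>2) \<partial>M) \<le> ennreal (sigma\<^sup>2)" .
  have em: "(\<lambda>w. (norm (ee n j w))\<^sup>2) \<in> borel_measurable M" using ee_M[OF n j] by measurable
  show int: "integrable M (\<lambda>w. (norm (ee n j w))\<^sup>2)"
    by (rule integrableI_nonneg[OF em]) (use nn in \<open>auto simp: top.not_eq_extremum intro: le_less_trans\<close>)
  have "(\<integral>w. (norm (ee n j w))\<^sup>2 \<partial>M) = enn2real (\<integral>\<^sup>+w. ennreal ((norm (ee n j w))\<^sup>2) \<partial>M)"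
    by (rule integral_eq_nn_integral[OF em]) simp
  also have "\<dots> \<le> sigma\<^sup>2" by (rule enn2real_leI[OF _ nn]) simp
  finally show "(\<integral>w. (norm (ee n j w))\<^sup>2 \<partial>M) \<le> sigma\<^sup>2" .
qed

lemma noise_zero:
  assumes n: "n < N" and j: "j < J"
    and Y: "Y \<in> borel_measurable (Msub (fed_index K N J - {Inr (Inr (t, n, j))}))"
    and iY: "integrable M (\<lambda>w. (norm (Y w))\<^sup>2)"
  shows "integrable M (\<lambda>w. inner (ee n j w) (Y w))" and "(\<integral>w. inner (ee n j w) (Y w) \<partial>M) = 0"
proof -
  let ?MSx = "Msub (fed_index K N J - {Inr (Inr (t, n, j))})"
  have WlS: "Wl n j \<in> measurable ?MSx borel" by (rule xi_round_Msub(5)[OF n j n]) (use j in auto)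
  define Z where "Z w = (Wl n j w, Y w)" for w
  have ZS: "Z \<in> measurable ?MSx (borel \<Otimes>\<^sub>M borel)" unfolding Z_def[abs_def] using WlS Y by measurable
  note ZM = xi_setup(1)[OF n j ZS] and Zeq = xi_setup(2)[OF n j ZS]
  have YM: "Y \<in> borel_measurable M" using ZM unfolding Z_def[abs_def] by measurable
  show int: "integrable M (\<lambda>w. inner (ee n j w) (Y w))"
    by (rule int_inner[OF ee_M[OF n j] YM noise_var(1)[OF n j] iY])
  define F where "F p = inner (g n (fst (fst p)) (snd p) - gradFn n (fst (fst p))) (snd (fst p))" for p
  have gm: "(\<lambda>p. g n (fst (fst p)) (snd p)) \<in> borel_measurable ((borel \<Otimes>\<^sub>M borel) \<Otimes>\<^sub>M S)"
  proof -
    have "(\<lambda>p. (fst (fst p), snd p)) \<in> measurable ((borel \<Otimes>\<^sub>M borel) \<Otimes>\<^sub>M S) (borel \<Otimes>\<^sub>M S)" by measurable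
    from measurable_compose[OF this g_meas[OF n]] show ?thesis by simp
  qed
  have Fm: "F \<in> borel_measurable ((borel \<Otimes>\<^sub>M borel) \<Otimes>\<^sub>M S)"
    unfolding F_def[abs_def] using gm gradFn_meas[OF n] by measurable
  have FZ: "F (Z w, xi t n j w) = inner (ee n j w) (Y w)" for w by (simp add: F_def Z_def ee_def)
  have intF: "integrable M (\<lambda>w. F (Z w, xi t n j w))" using int by (simp add: FZ)
  have inner0: "(\<integral>x. F ((W, y), x) \<partial>distr M S (xi t n j)) = 0" for W y
  proof -
    have gW: "(\<lambda>x. g n W x) \<in> borel_measurable S" by (rule g_fix_meas[OF n])
    have ig: "integrable (distr M S (xi t n j)) (\<lambda>x. g n W x)"
      by (subst integrable_distr_eq[OF xi_meas[OF n j] gW]) (use unbiased[where t=t and W=W, OF n j] in simp)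
    have mg: "(\<integral>x. g n W x \<partial>distr M S (xi t n j)) = gradFn n W"
      by (subst integral_distr[OF xi_meas[OF n j] gW]) (use unbiased[where t=t and W=W, OF n j] in simp)
    interpret PV: prob_space "distr M S (xi t n j)" by (rule prob_space_distr[OF xi_meas[OF n j]])
    have "(\<integral>x. F ((W, y), x) \<partial>distr M S (xi t n j)) = (\<integral>x. inner (g n W x - gradFn n W) y \<partial>distr M S (xi t n j))"
      by (simp add: F_def)
    also have "\<dots> = inner (\<integral>x. g n W x - gradFn n W \<partial>distr M S (xi t n j)) y"
      by (rule integral_inner_left) (use ig in simp)
    also have "(\<integral>x. g n W x - gradFn n W \<partial>distr M S (xi t n j)) = 0"
    proof -
      have p1: "PV.prob (space S) = 1" using PV.prob_space by simp
      show ?thesis using ig mg by (simp add: p1)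
    qed
    finally show ?thesis by simp
  qed
  have "(\<integral>w. inner (ee n j w) (Y w) \<partial>M) = (\<integral>w. F (Z w, xi t n j w) \<partial>M)" by (simp add: FZ)
  also have "\<dots> = (\<integral>w. (\<integral>x. F (Z w, x) \<partial>distr M S (xi t n j)) \<partial>M)"
    by (rule indep_fubini(1)[OF ZM xi_meas[OF n j] Zeq Fm intF])
  also have "\<dots> = 0" by (simp add: Z_def inner0)
  finally show "(\<integral>w. inner (ee n j w) (Y w) \<partial>M) = 0" .
qed

end

context fedK begin

lemma avgGrad_meas[measurable]: "avgGrad N gradFn \<in> borel_measurable borel"
proof -
  have "(\<lambda>W. \<Sum>n<N. gradFn n W) \<in> borel_measurable borel"
    by (rule borel_measurable_sum) (simp add: gradFn_meas)
  then show ?thesis unfolding avgGrad_def[abs_def] by measurable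
qed

lemma GG_Wt: "GG w = avgGrad N gradFn (Wt w)" by (simp add: GG_def)

lemma AE_A:
  "AE w in M. \<forall>n<N. An n w ** An n w = cc *\<^sub>R An n w \<and> transpose (An n w) = An n w"
  using AE_orth AE_space by eventually_elim (auto intro: An_props)

lemma int_G_aux: "integrable M (\<lambda>w. (norm (GG w))\<^sup>2) \<Longrightarrow> integrable M (\<lambda>w. (norm (avgGrad N gradFn (Wt w)))\<^sup>2)"
  by (simp add: GG_def)

context
  assumes iG: "integrable M (\<lambda>w. (norm (avgGrad N gradFn (Wt w)))\<^sup>2)"
begin

lemma int_gr: "n < N \<Longrightarrow> integrable M (\<lambda>w. (norm (gradFn n (Wt w)))\<^sup>2)"
proof (rule Bochner_Integration.integrable_bound)
  assume n: "n < N"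
  show "integrable M (\<lambda>w. real N * (vsig\<^sup>2 + (norm (avgGrad N gradFn (Wt w)))\<^sup>2))" using iG by simp
  show "(\<lambda>w. (norm (gradFn n (Wt w)))\<^sup>2) \<in> borel_measurable M" using gradFn_meas[OF n] by measurable
  show "AE w in M. norm ((norm (gradFn n (Wt w)))\<^sup>2) \<le> norm (real N * (vsig\<^sup>2 + (norm (avgGrad N gradFn (Wt w)))\<^sup>2))"
  proof (rule AE_I2)
    fix w
    have "(norm (gradFn n (Wt w)))\<^sup>2 \<le> (\<Sum>m<N. (norm (gradFn m (Wt w)))\<^sup>2)"
      using n by (intro member_le_sum) auto
    also have "\<dots> \<le> real N * (vsig\<^sup>2 + (norm (avgGrad N gradFn (Wt w)))\<^sup>2)"
      using hetero[of "Wt w"] N by (simp add: divide_le_eq mult.commute)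
    finally show "norm ((norm (gradFn n (Wt w)))\<^sup>2) \<le> norm (real N * (vsig\<^sup>2 + (norm (avgGrad N gradFn (Wt w)))\<^sup>2))"
      by simp
  qed
qed

lemma X1_facts:
  "integrable M (\<lambda>w. (1 / real N) * (\<Sum>n<N. inner (GG w) (gradFn n (Wt w) ** An n w)))"
  "(\<integral>w. (1 / real N) * (\<Sum>n<N. inner (GG w) (gradFn n (Wt w) ** An n w)) \<partial>M) = (\<integral>w. (norm (GG w))\<^sup>2 \<partial>M)"
proof -
  have i: "integrable M (\<lambda>w. inner (GG w) (gradFn n (Wt w) ** An n w))" if n: "n < N" for n
    using P_lemma(1)[OF n avgGrad_meas gradFn_meas[OF n] iG int_gr[OF n]] by (simp add: GG_def)
  have PL2: "(\<integral>w. inner (GG w) (gradFn n (Wt w) ** An n w) \<partial>M) = (\<integral>w. inner (GG w) (gradFn n (Wt w)) \<partial>M)"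
    if n: "n < N" for n
    using P_lemma(2)[OF n avgGrad_meas gradFn_meas[OF n] iG int_gr[OF n]] by (simp add: GG_def)
  show "integrable M (\<lambda>w. (1 / real N) * (\<Sum>n<N. inner (GG w) (gradFn n (Wt w) ** An n w)))"
    using i by (intro integrable_mult_right Bochner_Integration.integrable_sum) auto
  have "(\<integral>w. (1 / real N) * (\<Sum>n<N. inner (GG w) (gradFn n (Wt w) ** An n w)) \<partial>M)
      = (1 / real N) * (\<Sum>n<N. (\<integral>w. inner (GG w) (gradFn n (Wt w) ** An n w) \<partial>M))"
    by (simp add: Bochner_Integration.integral_sum i)
  also have "\<dots> = (1 / real N) * (\<Sum>n<N. (\<integral>w. inner (GG w) (gradFn n (Wt w)) \<partial>M))"
    using PL2 by simp
  also have "\<dots> = (\<integral>w. (1 / real N) * (\<Sum>n<N. inner (GG w) (gradFn n (Wt w))) \<partial>M)"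
  proof -
    have "integrable M (\<lambda>w. inner (GG w) (gradFn n (Wt w)))" if n: "n < N" for n
    proof (rule int_inner[OF GG_M _ _ int_gr[OF n]])
      show "(\<lambda>w. gradFn n (Wt w)) \<in> borel_measurable M" using gradFn_meas[OF n] by measurable
      show "integrable M (\<lambda>w. (norm (GG w))\<^sup>2)" using iG by (simp add: GG_def)
    qed
    then show ?thesis by (simp add: Bochner_Integration.integral_sum)
  qed
  also have "\<dots> = (\<integral>w. (norm (GG w))\<^sup>2 \<partial>M)"
  proof (rule Bochner_Integration.integral_cong[OF refl])
    fix w
    have "(1 / real N) * (\<Sum>n<N. inner (GG w) (gradFn n (Wt w))) = inner (GG w) (GG w)"
      by (simp add: GG_def avgGrad_def inner_sum_right)
    then show "(1 / real N) * (\<Sum>n<N. inner (GG w) (gradFn n (Wt w))) = (norm (GG w))\<^sup>2"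
      by (simp add: power2_norm_eq_inner)
  qed
  finally show "(\<integral>w. (1 / real N) * (\<Sum>n<N. inner (GG w) (gradFn n (Wt w) ** An n w)) \<partial>M) = (\<integral>w. (norm (GG w))\<^sup>2 \<partial>M)" .
qed

lemma X2_facts:
  "integrable M (\<lambda>w. (1 / real N) * (\<Sum>n<N. inner (GG w) (GG w ** An n w)))"
  "(\<integral>w. (1 / real N) * (\<Sum>n<N. inner (GG w) (GG w ** An n w)) \<partial>M) = (\<integral>w. (norm (GG w))\<^sup>2 \<partial>M)"
proof -
  have i: "integrable M (\<lambda>w. inner (GG w) (GG w ** An n w))" if n: "n < N" for n
    using P_lemma(1)[OF n avgGrad_meas avgGrad_meas iG iG] by (simp add: GG_def)
  have PL2: "(\<integral>w. inner (GG w) (GG w ** An n w) \<partial>M) = (\<integral>w. (norm (GG w))\<^sup>2 \<partial>M)" if n: "n < N" for n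
    using P_lemma(2)[OF n avgGrad_meas avgGrad_meas iG iG] by (simp add: GG_def power2_norm_eq_inner)
  show "integrable M (\<lambda>w. (1 / real N) * (\<Sum>n<N. inner (GG w) (GG w ** An n w)))"
    using i by (intro integrable_mult_right Bochner_Integration.integrable_sum) auto
  have "(\<integral>w. (1 / real N) * (\<Sum>n<N. inner (GG w) (GG w ** An n w)) \<partial>M)
      = (1 / real N) * (\<Sum>n<N. (\<integral>w. inner (GG w) (GG w ** An n w) \<partial>M))"
    by (simp add: Bochner_Integration.integral_sum i)
  also have "\<dots> = (1 / real N) * (\<Sum>n<N. (\<integral>w. (norm (GG w))\<^sup>2 \<partial>M))"
    using PL2 by simp
  also have "\<dots> = (\<integral>w. (norm (GG w))\<^sup>2 \<partial>M)" using N by simp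
  finally show "(\<integral>w. (1 / real N) * (\<Sum>n<N. inner (GG w) (GG w ** An n w)) \<partial>M) = (\<integral>w. (norm (GG w))\<^sup>2 \<partial>M)" .
qed

lemma X4_facts:
  "integrable M (\<lambda>w. (1 / real N) * (\<Sum>n<N. inner (gradFn n (Wt w)) (gradFn n (Wt w) ** An n w)))"
  "(\<integral>w. (1 / real N) * (\<Sum>n<N. inner (gradFn n (Wt w)) (gradFn n (Wt w) ** An n w)) \<partial>M)
     \<le> vsig\<^sup>2 + (\<integral>w. (norm (GG w))\<^sup>2 \<partial>M)"
proof -
  have PL1: "integrable M (\<lambda>w. inner (gradFn n (Wt w)) (gradFn n (Wt w) ** An n w))" if n: "n < N" for n
    by (rule P_lemma(1)[OF n gradFn_meas[OF n] gradFn_meas[OF n] int_gr[OF n] int_gr[OF n]])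
  have PL2: "(\<integral>w. inner (gradFn n (Wt w)) (gradFn n (Wt w) ** An n w) \<partial>M)
      = (\<integral>w. (norm (gradFn n (Wt w)))\<^sup>2 \<partial>M)" if n: "n < N" for n
    using P_lemma(2)[OF n gradFn_meas[OF n] gradFn_meas[OF n] int_gr[OF n] int_gr[OF n]] by (simp add: power2_norm_eq_inner)
  show "integrable M (\<lambda>w. (1 / real N) * (\<Sum>n<N. inner (gradFn n (Wt w)) (gradFn n (Wt w) ** An n w)))"
    using PL1 by (intro integrable_mult_right Bochner_Integration.integrable_sum) auto
  have "(\<integral>w. (1 / real N) * (\<Sum>n<N. inner (gradFn n (Wt w)) (gradFn n (Wt w) ** An n w)) \<partial>M)
      = (1 / real N) * (\<Sum>n<N. (\<integral>w. (norm (gradFn n (Wt w)))\<^sup>2 \<partial>M))"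
    by (simp add: Bochner_Integration.integral_sum PL1 PL2)
  also have "\<dots> = (\<integral>w. (\<Sum>n<N. (norm (gradFn n (Wt w)))\<^sup>2) / real N \<partial>M)"
    by (simp add: Bochner_Integration.integral_sum int_gr)
  also have "\<dots> \<le> (\<integral>w. vsig\<^sup>2 + (norm (GG w))\<^sup>2 \<partial>M)"
  proof (rule integral_mono)
    show "integrable M (\<lambda>w. (\<Sum>n<N. (norm (gradFn n (Wt w)))\<^sup>2) / real N)" by (intro integrable_divide Bochner_Integration.integrable_sum int_gr) auto
    show "integrable M (\<lambda>w. vsig\<^sup>2 + (norm (GG w))\<^sup>2)" using iG by (simp add: GG_def)
    show "\<And>w. w \<in> space M \<Longrightarrow> (\<Sum>n<N. (norm (gradFn n (Wt w)))\<^sup>2) / real N \<le> vsig\<^sup>2 + (norm (GG w))\<^sup>2"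
      using hetero by (simp add: GG_def)
  qed
  also have "\<dots> = vsig\<^sup>2 + (\<integral>w. (norm (GG w))\<^sup>2 \<partial>M)"
    using iG by (simp add: GG_def prob_space)
  finally show "(\<integral>w. (1 / real N) * (\<Sum>n<N. inner (gradFn n (Wt w)) (gradFn n (Wt w) ** An n w)) \<partial>M)
     \<le> vsig\<^sup>2 + (\<integral>w. (norm (GG w))\<^sup>2 \<partial>M)" .
qed

end
end

context fedK begin

lemma integral_sum2:
  fixes f :: "nat \<Rightarrow> nat \<Rightarrow> 'w \<Rightarrow> real"
  assumes i: "\<And>n j. n < N \<Longrightarrow> j < J \<Longrightarrow> integrable M (f n j)"
  shows "(\<integral>w. (\<Sum>n<N. \<Sum>j<J. f n j w) \<partial>M) = (\<Sum>n<N. \<Sum>j<J. (\<integral>w. f n j w \<partial>M))"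
proof -
  have "(\<integral>w. (\<Sum>n<N. \<Sum>j<J. f n j w) \<partial>M) = (\<Sum>n<N. (\<integral>w. (\<Sum>j<J. f n j w) \<partial>M))"
    by (rule Bochner_Integration.integral_sum) (use i in auto)
  also have "\<dots> = (\<Sum>n<N. \<Sum>j<J. (\<integral>w. f n j w \<partial>M))"
  proof (rule sum.cong[OF refl])
    fix n assume "n \<in> {..<N}"
    then show "(\<integral>w. (\<Sum>j<J. f n j w) \<partial>M) = (\<Sum>j<J. (\<integral>w. f n j w \<partial>M))"
      by (intro Bochner_Integration.integral_sum) (use i in auto)
  qed
  finally show ?thesis .
qed

definition EE where "EE w = (1 / real N) *\<^sub>R (\<Sum>n<N. \<Sum>j<J. ee n j w ** An n w)"

lemma EE_M[measurable]: "EE \<in> borel_measurable M"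
proof -
  have "(\<lambda>w. \<Sum>n<N. \<Sum>j<J. ee n j w ** An n w) \<in> borel_measurable M"
    by (intro borel_measurable_sum) (use ee_M An_M in measurable)
  then show ?thesis unfolding EE_def[abs_def] by measurable
qed

lemma normA_AE: "AE w in M. \<forall>n<N. \<forall>X::real^'dn^'dm. norm (X ** An n w) \<le> cc * norm X
    \<and> norm (X ** transpose (An n w)) \<le> cc * norm X"
  using AE_A
proof eventually_elim
  case (elim w)
  show ?case
  proof (intro allI impI conjI)
    fix n and X :: "real^'dn^'dm" assume n: "n < N"
    have AA: "An n w ** An n w = cc *\<^sub>R An n w" and At: "transpose (An n w) = An n w" using elim n by auto
    show "norm (X ** An n w) \<le> cc * norm X" by (rule normA_le[OF AA At less_imp_le[OF cc_pos]])
    show "norm (X ** transpose (An n w)) \<le> cc * norm X" using normA_le[OF AA At less_imp_le[OF cc_pos]] At by simp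
  qed
qed

lemma int_eeA:
  assumes n: "n < N" and j: "j < J"
  shows "integrable M (\<lambda>w. (norm (ee n j w ** An n w))\<^sup>2)"
proof (rule int_sq_bound[OF _ noise_var(1)[OF n j], of _ cc])
  show "(\<lambda>w. ee n j w ** An n w) \<in> borel_measurable M" using n j by measurable
  show "AE w in M. norm (ee n j w ** An n w) \<le> cc * norm (ee n j w)"
    using normA_AE by eventually_elim (use n in blast)
qed

lemma EeA_bound: "n < N \<Longrightarrow> j < J \<Longrightarrow> (\<integral>w. (norm (ee n j w ** An n w))\<^sup>2 \<partial>M) \<le> cc\<^sup>2 * sigma\<^sup>2"
proof -
  assume n: "n < N" and j: "j < J"
  have "(\<integral>w. (norm (ee n j w ** An n w))\<^sup>2 \<partial>M) \<le> (\<integral>w. cc\<^sup>2 * (norm (ee n j w))\<^sup>2 \<partial>M)"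
  proof (rule integral_mono_AE[OF int_eeA[OF n j]])
    show "integrable M (\<lambda>w. cc\<^sup>2 * (norm (ee n j w))\<^sup>2)" using noise_var(1)[OF n j] by simp
    show "AE w in M. (norm (ee n j w ** An n w))\<^sup>2 \<le> cc\<^sup>2 * (norm (ee n j w))\<^sup>2"
      using normA_AE
    proof eventually_elim
      case (elim w)
      then have "norm (ee n j w ** An n w) \<le> cc * norm (ee n j w)" using n by blast
      then have "(norm (ee n j w ** An n w))\<^sup>2 \<le> (cc * norm (ee n j w))\<^sup>2" by (rule power_mono) simp
      then show ?case by (simp add: power_mult_distrib)
    qed
  qed
  also have "\<dots> \<le> cc\<^sup>2 * sigma\<^sup>2" using noise_var(2)[OF n j] by (simp add: mult_left_mono)
  finally show ?thesis .
qed

context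
  assumes iG: "integrable M (\<lambda>w. (norm (avgGrad N gradFn (Wt w)))\<^sup>2)"
begin

lemma iGG: "integrable M (\<lambda>w. (norm (GG w))\<^sup>2)" using iG by (simp add: GG_def)

lemma X3_term:
  assumes n: "n < N" and j: "j < J"
  shows "integrable M (\<lambda>w. inner (GG w) (ee n j w ** An n w))"
    and "(\<integral>w. inner (GG w) (ee n j w ** An n w) \<partial>M) = 0"
proof -
  define Y where "Y w = GG w ** transpose (An n w)" for w
  have YS: "Y \<in> borel_measurable (Msub (fed_index K N J - {Inr (Inr (t, n, j))}))"
    unfolding Y_def[abs_def] using xi_round_Msub(7)[OF n j] xi_round_Msub(3)[OF n j n] by measurable
  have iY: "integrable M (\<lambda>w. (norm (Y w))\<^sup>2)"
  proof (rule int_sq_bound[OF _ iGG, of _ cc])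
    show "Y \<in> borel_measurable M" unfolding Y_def[abs_def] using n by measurable
    show "AE w in M. norm (Y w) \<le> cc * norm (GG w)" using normA_AE by eventually_elim (use n in \<open>simp add: Y_def\<close>)
  qed
  have eq: "inner (GG w) (ee n j w ** An n w) = inner (ee n j w) (Y w)" for w
    unfolding Y_def by (subst inner_matmul_right) (rule inner_commute)
  show "integrable M (\<lambda>w. inner (GG w) (ee n j w ** An n w))"
    using noise_zero(1)[OF n j YS iY] by (simp add: eq)
  show "(\<integral>w. inner (GG w) (ee n j w ** An n w) \<partial>M) = 0"
    using noise_zero(2)[OF n j YS iY] by (simp add: eq)
qed

lemma X3_facts:
  "integrable M (\<lambda>w. inner (GG w) (EE w))" "(\<integral>w. inner (GG w) (EE w) \<partial>M) = 0"
proof -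
  have eq: "inner (GG w) (EE w) = (1 / real N) * (\<Sum>n<N. \<Sum>j<J. inner (GG w) (ee n j w ** An n w))" for w
    by (simp add: EE_def inner_sum_right)
  have i: "integrable M (\<lambda>w. (1 / real N) * (\<Sum>n<N. \<Sum>j<J. inner (GG w) (ee n j w ** An n w)))"
    using X3_term(1) by (intro integrable_mult_right Bochner_Integration.integrable_sum) auto
  then show "integrable M (\<lambda>w. inner (GG w) (EE w))" by (simp add: eq)
  have "(\<integral>w. inner (GG w) (EE w) \<partial>M) = (1 / real N) * (\<Sum>n<N. \<Sum>j<J. (\<integral>w. inner (GG w) (ee n j w ** An n w) \<partial>M))"
    using X3_term(1) by (simp add: eq integral_sum2)
  also have "\<dots> = 0" using X3_term(2) by simp
  finally show "(\<integral>w. inner (GG w) (EE w) \<partial>M) = 0" .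
qed

end

lemma cross_zero:
  assumes n: "n < N" and j: "j < J" and n': "n' < N" and j': "j' < J" and c: "n \<noteq> n' \<or> j < j'"
  shows "integrable M (\<lambda>w. inner (ee n j w ** An n w) (ee n' j' w ** An n' w))"
    and "(\<integral>w. inner (ee n j w ** An n w) (ee n' j' w ** An n' w) \<partial>M) = 0"
proof -
  define Y where "Y w = (ee n j w ** An n w) ** transpose (An n' w)" for w
  have YS: "Y \<in> borel_measurable (Msub (fed_index K N J - {Inr (Inr (t, n', j'))}))"
  proof -
    have e1: "ee n j \<in> borel_measurable (Msub (fed_index K N J - {Inr (Inr (t, n', j'))}))"
      by (rule xi_round_Msub(6)[OF n' j' n j]) (use c in auto)
    have a1: "An n \<in> borel_measurable (Msub (fed_index K N J - {Inr (Inr (t, n', j'))}))"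
      by (rule xi_round_Msub(3)[OF n' j' n])
    have a2: "An n' \<in> borel_measurable (Msub (fed_index K N J - {Inr (Inr (t, n', j'))}))"
      by (rule xi_round_Msub(3)[OF n' j' n'])
    show ?thesis unfolding Y_def[abs_def] using e1 a1 a2 by measurable
  qed
  have iY: "integrable M (\<lambda>w. (norm (Y w))\<^sup>2)"
  proof (rule int_sq_bound[OF _ noise_var(1)[OF n j], of _ "cc * cc"])
    show "Y \<in> borel_measurable M" unfolding Y_def[abs_def] using n n' j by measurable
    show "AE w in M. norm (Y w) \<le> cc * cc * norm (ee n j w)"
      using normA_AE
    proof eventually_elim
      case (elim w)
      have "norm (Y w) \<le> cc * norm (ee n j w ** An n w)" using elim n' by (simp add: Y_def)
      also have "\<dots> \<le> cc * (cc * norm (ee n j w))"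
        using elim n cc_pos by (intro mult_left_mono) auto
      finally show ?case by (simp add: mult.assoc)
    qed
  qed
  have eq: "inner (ee n j w ** An n w) (ee n' j' w ** An n' w) = inner (ee n' j' w) (Y w)" for w
    unfolding Y_def by (subst inner_matmul_right) (rule inner_commute)
  show "integrable M (\<lambda>w. inner (ee n j w ** An n w) (ee n' j' w ** An n' w))"
    using noise_zero(1)[OF n' j' YS iY] by (simp add: eq)
  show "(\<integral>w. inner (ee n j w ** An n w) (ee n' j' w ** An n' w) \<partial>M) = 0"
    using noise_zero(2)[OF n' j' YS iY] by (simp add: eq)
qed

lemma X5_facts:
  "integrable M (\<lambda>w. (norm (EE w))\<^sup>2)" "(\<integral>w. (norm (EE w))\<^sup>2 \<partial>M) \<le> real J * cc\<^sup>2 * sigma\<^sup>2 / real N"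
proof -
  define I where "I = {..<N} \<times> {..<J}"
  define h where "h p w = ee (fst p) (snd p) w ** An (fst p) w" for p w
  have fI: "finite I" by (simp add: I_def)
  have cI: "card I = N * J" by (simp add: I_def card_cartesian_product)
  have EEh: "EE w = (1 / real N) *\<^sub>R (\<Sum>p\<in>I. h p w)" for w
    by (simp add: EE_def I_def h_def sum.cartesian_product case_prod_beta)
  have nsq: "(norm (EE w))\<^sup>2 = (1 / real N)\<^sup>2 * (\<Sum>p\<in>I. \<Sum>q\<in>I. inner (h p w) (h q w))" for w
  proof -
    have "(norm (\<Sum>p\<in>I. h p w))\<^sup>2 = (\<Sum>p\<in>I. \<Sum>q\<in>I. inner (h p w) (h q w))"
      by (simp add: power2_norm_eq_inner inner_sum_left inner_sum_right) (rule sum.swap)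
    then show ?thesis unfolding EEh norm_scaleR power_mult_distrib power2_abs by simp
  qed
  have ih: "integrable M (\<lambda>w. (norm (h p w))\<^sup>2)" if p: "p \<in> I" for p
    using p int_eeA by (auto simp: I_def h_def)
  have hM: "(\<lambda>w. h p w) \<in> borel_measurable M" if p: "p \<in> I" for p
    using p by (auto simp: I_def h_def)
  have ipq: "integrable M (\<lambda>w. inner (h p w) (h q w))" if "p \<in> I" "q \<in> I" for p q
    by (rule int_inner[OF hM hM ih ih]) (use that in auto)
  have epq: "(\<integral>w. inner (h p w) (h q w) \<partial>M) = (if p = q then (\<integral>w. (norm (h p w))\<^sup>2 \<partial>M) else 0)"
    if p: "p \<in> I" and q: "q \<in> I" for p q
  proof (cases "p = q")
    case True then show ?thesis by (simp add: power2_norm_eq_inner)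
  next
    case False
    obtain n j n' j' where pq: "p = (n, j)" "q = (n', j')" by (cases p, cases q) auto
    have b: "n < N" "j < J" "n' < N" "j' < J" using p q pq by (auto simp: I_def)
    show ?thesis
    proof (cases "n \<noteq> n' \<or> j < j'")
      case True then show ?thesis using cross_zero(2)[OF b True] False pq by (auto simp: h_def)
    next
      case c: False
      then have "n' \<noteq> n \<or> j' < j" using False pq by auto
      from cross_zero(2)[OF b(3,4,1,2) this] False pq show ?thesis by (auto simp: h_def inner_commute)
    qed
  qed
  show "integrable M (\<lambda>w. (norm (EE w))\<^sup>2)"
    unfolding nsq using ipq by (intro integrable_mult_right Bochner_Integration.integrable_sum) auto
  have "(\<integral>w. (norm (EE w))\<^sup>2 \<partial>M) = (1 / real N)\<^sup>2 * (\<Sum>p\<in>I. \<Sum>q\<in>I. (\<integral>w. inner (h p w) (h q w) \<partial>M))"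
    unfolding nsq using ipq by (simp add: Bochner_Integration.integral_sum Bochner_Integration.integrable_sum)
  also have "\<dots> = (1 / real N)\<^sup>2 * (\<Sum>p\<in>I. (\<integral>w. (norm (h p w))\<^sup>2 \<partial>M))"
  proof -
    have "(\<Sum>p\<in>I. \<Sum>q\<in>I. (\<integral>w. inner (h p w) (h q w) \<partial>M))
        = (\<Sum>p\<in>I. \<Sum>q\<in>I. (if p = q then (\<integral>w. (norm (h p w))\<^sup>2 \<partial>M) else 0))"
      by (intro sum.cong refl epq) auto
    also have "\<dots> = (\<Sum>p\<in>I. (\<integral>w. (norm (h p w))\<^sup>2 \<partial>M))"
      by (rule sum.cong[OF refl]) (simp add: fI sum.delta)
    finally show ?thesis by simp
  qed
  also have "\<dots> \<le> (1 / real N)\<^sup>2 * (\<Sum>p\<in>I. cc\<^sup>2 * sigma\<^sup>2)"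
    by (intro mult_left_mono sum_mono) (auto simp: I_def h_def EeA_bound)
  also have "\<dots> = real J * cc\<^sup>2 * sigma\<^sup>2 / real N"
    using N by (simp add: cI power2_eq_square field_simps)
  finally show "(\<integral>w. (norm (EE w))\<^sup>2 \<partial>M) \<le> real J * cc\<^sup>2 * sigma\<^sup>2 / real N" .
qed

end

context fedK begin

lemma avgF_descent:
  "avgF N Fn (W + D) \<le> avgF N Fn W + inner (avgGrad N gradFn W) D + L / 2 * (norm D)\<^sup>2"
proof -
  have each: "Fn n (W + D) \<le> Fn n W + inner (gradFn n W) D + L / 2 * (norm D)\<^sup>2" if n: "n < N" for n
    by (rule descent_lemma[where gr="gradFn n"]) (use deriv[OF n] smooth[OF n] in auto)
  have "(\<Sum>n<N. Fn n (W + D)) \<le> (\<Sum>n<N. Fn n W + inner (gradFn n W) D + L / 2 * (norm D)\<^sup>2)"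
    by (rule sum_mono) (use each in auto)
  also have "\<dots> = (\<Sum>n<N. Fn n W) + real N * inner (avgGrad N gradFn W) D + real N * (L / 2 * (norm D)\<^sup>2)"
    using N by (simp add: sum.distrib avgGrad_def inner_sum_left)
  finally have "(\<Sum>n<N. Fn n (W + D)) / real N \<le>
      ((\<Sum>n<N. Fn n W) + real N * inner (avgGrad N gradFn W) D + real N * (L / 2 * (norm D)\<^sup>2)) / real N"
    using N by (intro divide_right_mono) auto
  also have "\<dots> = avgF N Fn W + inner (avgGrad N gradFn W) D + L / 2 * (norm D)\<^sup>2"
    using N by (simp add: avgF_def add_divide_distrib)
  finally show ?thesis by (simp add: avgF_def)
qed

definition "X1 w = (1 / real N) * (\<Sum>n<N. inner (GG w) (gradFn n (Wt w) ** An n w))"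
definition "X2 w = (1 / real N) * (\<Sum>n<N. inner (GG w) (GG w ** An n w))"
definition "XQ w = (1 / real N) * (\<Sum>n<N. \<Sum>j<J. (norm (Uv n j w))\<^sup>2)"
definition "X4 w = (1 / real N) * (\<Sum>n<N. inner (gradFn n (Wt w)) (gradFn n (Wt w) ** An n w))"
definition "kappa = eta * cc * L\<^sup>2 / 2 + 2 * L^3 * eta\<^sup>2 * real J * cc\<^sup>2"

lemma pointwise:
  "AE w in M. avgF N Fn (Wrv g eta N J W0 P kk xi (Suc t) w) \<le> avgF N Fn (Wt w)
      + (- eta * real J * X1 w + eta * real J / 2 * X2 w + kappa * XQ w - eta * inner (GG w) (EE w)
         + 2 * L * eta\<^sup>2 * (real J)\<^sup>2 * cc * X4 w + L * eta\<^sup>2 * (norm (EE w))\<^sup>2)"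
  using AE_A
proof eventually_elim
  case (elim w)
  define Dl where "Dl = Wrv g eta N J W0 P kk xi (Suc t) w - Wt w"
  have W1: "Wrv g eta N J W0 P kk xi (Suc t) w = Wt w + Dl" by (simp add: Dl_def)
  have Dl': "Dl = (- eta / real N) *\<^sub>R (\<Sum>n<N. \<Sum>j<J. (gradFn n (Wl n j w) + ee n j w) ** An n w)"
    unfolding Dl_def W_next_Dl by simp
  have db: "inner (GG w) Dl + L / 2 * (norm Dl)\<^sup>2 \<le>
      - eta * real J * ((1 / real N) * (\<Sum>n<N. inner (GG w) (gradFn n (Wt w) ** An n w)))
      + eta * real J / 2 * ((1 / real N) * (\<Sum>n<N. inner (GG w) (GG w ** An n w)))
      + (eta * cc * L\<^sup>2 / 2 + 2 * L^3 * eta\<^sup>2 * real J * cc\<^sup>2)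
          * ((1 / real N) * (\<Sum>n<N. \<Sum>j<J. (norm (Uv n j w))\<^sup>2))
      - eta * inner (GG w) (EE w)
      + 2 * L * eta\<^sup>2 * (real J)\<^sup>2 * cc * ((1 / real N) * (\<Sum>n<N. inner (gradFn n (Wt w)) (gradFn n (Wt w) ** An n w)))
      + L * eta\<^sup>2 * (norm (EE w))\<^sup>2"
  proof (rule det_bound[OF N cc_pos eta_pos less_imp_le[OF L_pos]])
    show "\<And>n. n < N \<Longrightarrow> An n w ** An n w = cc *\<^sub>R An n w" using elim by auto
    show "\<And>n. n < N \<Longrightarrow> transpose (An n w) = An n w" using elim by auto
    show "\<And>n j. n < N \<Longrightarrow> j < J \<Longrightarrow> norm (gradFn n (Wl n j w) - gradFn n (Wt w)) \<le> L * norm (Uv n j w)"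
    proof -
      fix n j assume n: "n < N" and j: "j < J"
      show "norm (gradFn n (Wl n j w) - gradFn n (Wt w)) \<le> L * norm (Uv n j w)"
        using smooth[OF n, of "Wl n j w" "Wt w"] by (simp add: Wl_def)
    qed
    show "GG w = (1 / real N) *\<^sub>R (\<Sum>n<N. gradFn n (Wt w))" by (simp add: GG_def avgGrad_def)
    show "EE w = (1 / real N) *\<^sub>R (\<Sum>n<N. \<Sum>j<J. ee n j w ** An n w)" by (simp add: EE_def)
    show "Dl = (- eta / real N) *\<^sub>R (\<Sum>n<N. \<Sum>j<J. (gradFn n (Wl n j w) + ee n j w) ** An n w)" by (rule Dl')
  qed
  have "avgF N Fn (Wrv g eta N J W0 P kk xi (Suc t) w) \<le> avgF N Fn (Wt w) + inner (GG w) Dl + L / 2 * (norm Dl)\<^sup>2"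
    unfolding W1 GG_def by (rule avgF_descent)
  with db show ?case by (simp add: X1_def X2_def XQ_def X4_def kappa_def)
qed

end

lemma integral_lin6:
  fixes f0 f1 f2 f3 f4 f5 f6 :: "'a \<Rightarrow> real"
  assumes "integrable M f0" "integrable M f1" "integrable M f2" "integrable M f3"
    "integrable M f4" "integrable M f5" "integrable M f6"
  shows "(\<integral>w. f0 w + (c1 * f1 w + c2 * f2 w + c3 * f3 w - c4 * f4 w + c5 * f5 w + c6 * f6 w) \<partial>M)
    = integral\<^sup>L M f0 + (c1 * integral\<^sup>L M f1 + c2 * integral\<^sup>L M f2 + c3 * integral\<^sup>L M f3
        - c4 * integral\<^sup>L M f4 + c5 * integral\<^sup>L M f5 + c6 * integral\<^sup>L M f6)"
  using assms by (simp add: Bochner_Integration.integral_add Bochner_Integration.integral_diff)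

lemma final_arith:
  fixes F0 F1 EG E4 E5 Qs cc L eta J vsig sigma N kappa :: real
  assumes main: "F1 \<le> F0 + (- eta * J * EG + eta * J / 2 * EG + kappa * Qs - eta * 0
        + 2 * L * eta\<^sup>2 * J\<^sup>2 * cc * E4 + L * eta\<^sup>2 * E5)"
    and E4: "E4 \<le> vsig\<^sup>2 + EG" and E5: "E5 \<le> J * cc\<^sup>2 * sigma\<^sup>2 / N"
    and EG: "EG \<ge> 0" and Qs: "Qs \<ge> 0" and cc: "cc \<ge> 1" and eta: "eta > 0" and L: "L > 0"
    and J: "J \<ge> 1" and small: "eta * L * J * cc \<le> 1 / 16"
    and kappa: "kappa = eta * cc * L\<^sup>2 / 2 + 2 * L^3 * eta\<^sup>2 * J * cc\<^sup>2"
  shows "F1 \<le> F0 + 2 * L * eta\<^sup>2 * J\<^sup>2 * cc * vsig\<^sup>2 + eta * cc\<^sup>2 * L\<^sup>2 * Qs - 3 * J * eta / 8 * EG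
      + L * J * eta\<^sup>2 * cc\<^sup>2 * sigma\<^sup>2 / N"
proof -
  have c0: "2 * L * eta\<^sup>2 * J\<^sup>2 * cc \<ge> 0" using L eta cc by simp
  have a: "2 * L * eta\<^sup>2 * J\<^sup>2 * cc * E4 \<le> 2 * L * eta\<^sup>2 * J\<^sup>2 * cc * (vsig\<^sup>2 + EG)"
    by (rule mult_left_mono[OF E4 c0])
  have b: "L * eta\<^sup>2 * E5 \<le> L * eta\<^sup>2 * (J * cc\<^sup>2 * sigma\<^sup>2 / N)"
    by (rule mult_left_mono[OF E5]) (use L in simp)
  have s8: "2 * (eta * L * J * cc) \<le> 1 / 8" using small by simp
  have k: "kappa = eta * L\<^sup>2 * cc * (1 / 2 + 2 * (eta * L * J * cc))"
    unfolding kappa by (simp add: power2_eq_square power3_eq_cube algebra_simps)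
  have k2: "kappa \<le> eta * L\<^sup>2 * cc * (5 / 8)"
    unfolding k using s8 eta L cc by (intro mult_left_mono) auto
  also have "\<dots> \<le> eta * L\<^sup>2 * cc * cc"
    using eta L cc by (intro mult_left_mono) auto
  finally have kq: "kappa * Qs \<le> eta * cc\<^sup>2 * L\<^sup>2 * Qs"
    using Qs by (intro mult_right_mono) (auto simp: power2_eq_square mult_ac)
  have g: "2 * L * eta\<^sup>2 * J\<^sup>2 * cc = (eta * J) * (2 * (eta * L * J * cc))"
    by (simp add: power2_eq_square algebra_simps)
  have g2: "2 * L * eta\<^sup>2 * J\<^sup>2 * cc \<le> (eta * J) * (1 / 8)"
    unfolding g using s8 eta J by (intro mult_left_mono) auto
  have gEG: "2 * L * eta\<^sup>2 * J\<^sup>2 * cc * EG \<le> (eta * J) * (1 / 8) * EG"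
    by (rule mult_right_mono[OF g2 EG])
  have sig: "L * eta\<^sup>2 * (J * cc\<^sup>2 * sigma\<^sup>2 / N) = L * J * eta\<^sup>2 * cc\<^sup>2 * sigma\<^sup>2 / N"
    by (simp add: algebra_simps)
  show ?thesis
    using main a b kq gEG sig by (simp add: algebra_simps)
qed

context fedK begin

lemma main:
  assumes int_F: "integrable M (\<lambda>w. avgF N Fn (Wrv g eta N J W0 P kk xi t w))"
    and int_F': "integrable M (\<lambda>w. avgF N Fn (Wrv g eta N J W0 P kk xi (Suc t) w))"
    and int_G: "integrable M (\<lambda>w. (norm (avgGrad N gradFn (Wrv g eta N J W0 P kk xi t w)))\<^sup>2)"
    and int_BP: "\<And>n j. n < N \<Longrightarrow> j < J \<Longrightarrow>
        integrable M (\<lambda>w. (norm (Brv g eta N J W0 P kk xi t n j w ** P t (kk t n w) w))\<^sup>2)"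
  shows "(\<integral>w. avgF N Fn (Wrv g eta N J W0 P kk xi (Suc t) w) \<partial>M)
    \<le> (\<integral>w. avgF N Fn (Wrv g eta N J W0 P kk xi t w) \<partial>M)
       + 2 * L * real CARD('dn) * (real J)\<^sup>2 * eta\<^sup>2 / real CARD('r) * vsig\<^sup>2
       + eta * (real CARD('dn))\<^sup>2 * L\<^sup>2 / (real CARD('r))\<^sup>2
           * ((1 / real N) * (\<Sum>n<N. \<Sum>j<J.
                (\<integral>w. (norm (Brv g eta N J W0 P kk xi t n j w ** P t (kk t n w) w))\<^sup>2 \<partial>M)))
       - 3 * real J * eta / 8
           * (\<integral>w. (norm (avgGrad N gradFn (Wrv g eta N J W0 P kk xi t w)))\<^sup>2 \<partial>M)
       + L * real J * eta\<^sup>2 * (real CARD('dn))\<^sup>2 * sigma\<^sup>2 / (real N * (real CARD('r))\<^sup>2)"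
proof -
  have iG: "integrable M (\<lambda>w. (norm (avgGrad N gradFn (Wt w)))\<^sup>2)" using int_G by (simp add: Wt_def)
  have UvB: "Uv n j w = Brv g eta N J W0 P kk xi t n j w ** P t (kk t n w) w" for n j w
    by (simp add: Uv_def Pn_def)
  have iU: "integrable M (\<lambda>w. (norm (Uv n j w))\<^sup>2)" if "n < N" "j < J" for n j
    using int_BP[OF that] by (simp add: UvB)
  define EG where "EG = (\<integral>w. (norm (GG w))\<^sup>2 \<partial>M)"
  define Qs where "Qs = (1 / real N) * (\<Sum>n<N. \<Sum>j<J. (\<integral>w. (norm (Uv n j w))\<^sup>2 \<partial>M))"
  have iXQ: "integrable M XQ" unfolding XQ_def[abs_def]
    using iU by (intro integrable_mult_right Bochner_Integration.integrable_sum) auto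
  have eXQ: "integral\<^sup>L M XQ = Qs"
    unfolding XQ_def[abs_def] Qs_def using iU by (simp add: integral_sum2)
  have iX1: "integrable M X1" and eX1: "integral\<^sup>L M X1 = EG"
    using X1_facts[OF iG] by (simp_all add: X1_def[abs_def] EG_def)
  have iX2: "integrable M X2" and eX2: "integral\<^sup>L M X2 = EG"
    using X2_facts[OF iG] by (simp_all add: X2_def[abs_def] EG_def)
  have iX4: "integrable M X4" and eX4: "integral\<^sup>L M X4 \<le> vsig\<^sup>2 + EG"
    using X4_facts[OF iG] by (simp_all add: X4_def[abs_def] EG_def)
  note iX3 = X3_facts(1)[OF iG] and eX3 = X3_facts(2)[OF iG]
  note iX5 = X5_facts(1) and eX5 = X5_facts(2)
  have iF0: "integrable M (\<lambda>w. avgF N Fn (Wt w))" using int_F by (simp add: Wt_def)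
  have "(\<integral>w. avgF N Fn (Wrv g eta N J W0 P kk xi (Suc t) w) \<partial>M)
      \<le> (\<integral>w. avgF N Fn (Wt w)
      + (- eta * real J * X1 w + eta * real J / 2 * X2 w + kappa * XQ w - eta * inner (GG w) (EE w)
         + 2 * L * eta\<^sup>2 * (real J)\<^sup>2 * cc * X4 w + L * eta\<^sup>2 * (norm (EE w))\<^sup>2) \<partial>M)"
  proof (rule integral_mono_AE[OF int_F' _ pointwise])
    show "integrable M (\<lambda>w. avgF N Fn (Wt w)
      + (- eta * real J * X1 w + eta * real J / 2 * X2 w + kappa * XQ w - eta * inner (GG w) (EE w)
         + 2 * L * eta\<^sup>2 * (real J)\<^sup>2 * cc * X4 w + L * eta\<^sup>2 * (norm (EE w))\<^sup>2))"
      using iF0 iX1 iX2 iXQ iX3 iX4 iX5 by simp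
  qed
  also have "\<dots> = (\<integral>w. avgF N Fn (Wt w) \<partial>M)
      + (- eta * real J * integral\<^sup>L M X1 + eta * real J / 2 * integral\<^sup>L M X2 + kappa * integral\<^sup>L M XQ
         - eta * (\<integral>w. inner (GG w) (EE w) \<partial>M)
         + 2 * L * eta\<^sup>2 * (real J)\<^sup>2 * cc * integral\<^sup>L M X4 + L * eta\<^sup>2 * (\<integral>w. (norm (EE w))\<^sup>2 \<partial>M))"
    by (rule integral_lin6[OF iF0 iX1 iX2 iXQ iX3 iX4 iX5])
  finally have step: "(\<integral>w. avgF N Fn (Wrv g eta N J W0 P kk xi (Suc t) w) \<partial>M)
      \<le> (\<integral>w. avgF N Fn (Wt w) \<partial>M)
      + (- eta * real J * EG + eta * real J / 2 * EG + kappa * Qs - eta * 0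
         + 2 * L * eta\<^sup>2 * (real J)\<^sup>2 * cc * integral\<^sup>L M X4 + L * eta\<^sup>2 * (\<integral>w. (norm (EE w))\<^sup>2 \<partial>M))"
    by (simp add: eX1 eX2 eXQ eX3)
  have EG0: "EG \<ge> 0" unfolding EG_def by simp
  have Qs0: "Qs \<ge> 0" unfolding Qs_def by (intro mult_nonneg_nonneg sum_nonneg integral_nonneg_AE) auto
  have fin: "(\<integral>w. avgF N Fn (Wrv g eta N J W0 P kk xi (Suc t) w) \<partial>M)
      \<le> (\<integral>w. avgF N Fn (Wt w) \<partial>M) + 2 * L * eta\<^sup>2 * (real J)\<^sup>2 * cc * vsig\<^sup>2 + eta * cc\<^sup>2 * L\<^sup>2 * Qs
        - 3 * real J * eta / 8 * EG + L * real J * eta\<^sup>2 * cc\<^sup>2 * sigma\<^sup>2 / real N"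
    by (rule final_arith[OF step eX4 eX5 EG0 Qs0 cc_ge1 eta_pos L_pos _ step_small kappa_def]) (use J in simp)
  have e1: "2 * L * real CARD('dn) * (real J)\<^sup>2 * eta\<^sup>2 / real CARD('r) * vsig\<^sup>2
      = 2 * L * eta\<^sup>2 * (real J)\<^sup>2 * cc * vsig\<^sup>2" by (simp add: cc_def)
  have e2: "eta * (real CARD('dn))\<^sup>2 * L\<^sup>2 / (real CARD('r))\<^sup>2 = eta * cc\<^sup>2 * L\<^sup>2"
    by (simp add: cc_def power_divide)
  have e3: "L * real J * eta\<^sup>2 * (real CARD('dn))\<^sup>2 * sigma\<^sup>2 / (real N * (real CARD('r))\<^sup>2)
      = L * real J * eta\<^sup>2 * cc\<^sup>2 * sigma\<^sup>2 / real N" by (simp add: cc_def power_divide)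
  have e4: "(1 / real N) * (\<Sum>n<N. \<Sum>j<J.
                (\<integral>w. (norm (Brv g eta N J W0 P kk xi t n j w ** P t (kk t n w) w))\<^sup>2 \<partial>M)) = Qs"
    by (simp add: Qs_def UvB)
  have e5: "(\<integral>w. (norm (avgGrad N gradFn (Wrv g eta N J W0 P kk xi t w)))\<^sup>2 \<partial>M) = EG"
    by (simp add: EG_def GG_def Wt_def)
  show ?thesis unfolding e1 e2 e3 e4 e5 using fin by (simp add: Wt_def)
qed

end

theorem lemma1:
  fixes M :: "'w measure" and S :: "'a measure"
    and Fn :: "nat \<Rightarrow> real^'dn^'dm \<Rightarrow> real"
    and gradFn :: "nat \<Rightarrow> real^'dn^'dm \<Rightarrow> real^'dn^'dm"
    and g :: "nat \<Rightarrow> real^'dn^'dm \<Rightarrow> 'a \<Rightarrow> real^'dn^'dm"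
    and P :: "nat \<Rightarrow> nat \<Rightarrow> 'w \<Rightarrow> real^'dn^'r"
    and kk :: "nat \<Rightarrow> nat \<Rightarrow> 'w \<Rightarrow> nat"
    and xi :: "nat \<Rightarrow> nat \<Rightarrow> nat \<Rightarrow> 'w \<Rightarrow> 'a"
    and W0 :: "real^'dn^'dm"
    and N K J t :: nat
    and L eta sigma vsig :: real
  assumes M: "prob_space M"
    and N: "N \<ge> 1" and K: "K \<ge> 1" and J: "J \<ge> 1"
    and deriv: "\<And>n W. n < N \<Longrightarrow> (Fn n has_derivative (\<lambda>H. gradFn n W \<bullet> H)) (at W)"
    and smooth: "\<And>n W1 W2. n < N \<Longrightarrow> norm (gradFn n W1 - gradFn n W2) \<le> L * norm (W1 - W2)"
    and g_meas: "\<And>n. n < N \<Longrightarrow> (\<lambda>p. g n (fst p) (snd p)) \<in> borel_measurable (borel \<Otimes>\<^sub>M S)"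
    and xi_meas: "\<And>t n j. n < N \<Longrightarrow> j < J \<Longrightarrow> xi t n j \<in> measurable M S"
    and unbiased: "\<And>t n j W. n < N \<Longrightarrow> j < J \<Longrightarrow>
        integrable M (\<lambda>w. g n W (xi t n j w)) \<and> (\<integral>w. g n W (xi t n j w) \<partial>M) = gradFn n W"
    and variance: "\<And>t n j W. n < N \<Longrightarrow> j < J \<Longrightarrow>
        integrable M (\<lambda>w. (norm (g n W (xi t n j w) - gradFn n W))\<^sup>2) \<and>
        (\<integral>w. (norm (g n W (xi t n j w) - gradFn n W))\<^sup>2 \<partial>M) \<le> sigma\<^sup>2"
    and vsig: "vsig \<ge> 0"
    and hetero: "\<And>W. (\<Sum>n<N. (norm (gradFn n W))\<^sup>2) / real N \<le> vsig\<^sup>2 + (norm (avgGrad N gradFn W))\<^sup>2"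
    and P_meas: "\<And>t k. k < K \<Longrightarrow> P t k \<in> borel_measurable M"
    and P_orth: "\<And>t k. k < K \<Longrightarrow>
        AE w in M. P t k w ** transpose (P t k w) = (real CARD('dn) / real CARD('r)) *\<^sub>R mat 1"
    and P_mean: "\<And>t k. k < K \<Longrightarrow> (\<integral>w. transpose (P t k w) ** P t k w \<partial>M) = mat 1"
    and kk_meas: "\<And>t n. n < N \<Longrightarrow> kk t n \<in> measurable M (count_space UNIV)"
    and kk_range: "\<And>t n w. n < N \<Longrightarrow> w \<in> space M \<Longrightarrow> kk t n w < K"
    and kk_unif: "\<And>t n k. n < N \<Longrightarrow> k < K \<Longrightarrow> measure M {w \<in> space M. kk t n w = k} = 1 / real K"
    and indep: "prob_space.indep_sets M (fed_events M S P kk xi) (fed_index K N J)"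
    and eta_pos: "0 < eta"
    and eta_le: "eta \<le> real CARD('r) / (16 * L * real CARD('dn) * real J)"
    and int_F: "integrable M (\<lambda>w. avgF N Fn (Wrv g eta N J W0 P kk xi t w))"
    and int_F': "integrable M (\<lambda>w. avgF N Fn (Wrv g eta N J W0 P kk xi (Suc t) w))"
    and int_G: "integrable M (\<lambda>w. (norm (avgGrad N gradFn (Wrv g eta N J W0 P kk xi t w)))\<^sup>2)"
    and int_BP: "\<And>n j. n < N \<Longrightarrow> j < J \<Longrightarrow>
        integrable M (\<lambda>w. (norm (Brv g eta N J W0 P kk xi t n j w ** P t (kk t n w) w))\<^sup>2)"
  shows "(\<integral>w. avgF N Fn (Wrv g eta N J W0 P kk xi (Suc t) w) \<partial>M)
    \<le> (\<integral>w. avgF N Fn (Wrv g eta N J W0 P kk xi t w) \<partial>M)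
       + 2 * L * real CARD('dn) * (real J)\<^sup>2 * eta\<^sup>2 / real CARD('r) * vsig\<^sup>2
       + eta * (real CARD('dn))\<^sup>2 * L\<^sup>2 / (real CARD('r))\<^sup>2
           * ((1 / real N) * (\<Sum>n<N. \<Sum>j<J.
                (\<integral>w. (norm (Brv g eta N J W0 P kk xi t n j w ** P t (kk t n w) w))\<^sup>2 \<partial>M)))
       - 3 * real J * eta / 8
           * (\<integral>w. (norm (avgGrad N gradFn (Wrv g eta N J W0 P kk xi t w)))\<^sup>2 \<partial>M)
       + L * real J * eta\<^sup>2 * (real CARD('dn))\<^sup>2 * sigma\<^sup>2 / (real N * (real CARD('r))\<^sup>2)"
proof -
  interpret fedK M S Fn gradFn g P kk xi W0 N K J t L eta sigma vsig
    by (rule fedK.intro) (fact M N K J deriv smooth g_meas xi_meas unbiased variance vsig hetero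
        P_meas P_orth P_mean kk_meas kk_range indep eta_pos eta_le)+
  show ?thesis by (rule main[OF int_F int_F' int_G int_BP])
qed

end
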